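(* There is a one-round proof labeling scheme for $\textsc{Permutation-Recognition}$ with certificates of size $\mathcal{O}(\log n)$; that is, a proof labeling scheme deciding whether the connected $n$-node network $G$ is a permutation graph, in which every certificate has $\mathcal{O}(\log n)$ bits.
   Context: A graph $G=([n],E)$ (with $[n]=\{0,\dots,n-1\}$) is a permutation graph if there exists a permutation $\pi$ of $[n]$ such that for all $i,j\in[n]$, $\{i,j\}\in E$ iff $(i-j)(\pi(i)-\pi(j))<0$; a general graph is a permutation graph if it is isomorphic to such a graph. $\textsc{Permutation-Recognition}$ is the set of configurations $\langle G,\mathrm{id}\rangle$ with $G$ a permutation graph. Distributed setting: $G$ is a simple connected $n$-node graph, each node has a unique identifier in $\{1,\dots,\mathrm{poly}(n)\}$, nodes know only a polynomial upper bound on $n$. A proof labeling scheme (one-round, $\mathsf{dM}$) consists of an untrusted prover assigning each node $v$ a certificate $c(v)$, followed by one deterministic verification round in which each node sees its own id and certificate and the certificates (and ids) of its neighbors and accepts or rejects. Completeness: if $G$ is in the class, some certificate assignment makes all nodes accept. Soundness: if $G$ is not in the class, for every certificate assignment at least one node rejects. Its size is the maximum certificate length in bits. *)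

theory Defs
  imports Complex_Main "HOL-Combinatorics.Permutations"
begin

definition perm_edge :: "(nat \<Rightarrow> nat) \<Rightarrow> nat \<Rightarrow> nat \<Rightarrow> bool" where
  "perm_edge \<pi> i j \<longleftrightarrow> (int i - int j) * (int (\<pi> i) - int (\<pi> j)) < 0"

definition is_permutation_graph :: "nat set \<Rightarrow> (nat \<Rightarrow> nat \<Rightarrow> bool) \<Rightarrow> bool" where
  "is_permutation_graph V E \<longleftrightarrow>
     (\<exists>f \<pi>. bij_betw f V {0..<card V} \<and> \<pi> permutes {0..<card V} \<and>
        (\<forall>u\<in>V. \<forall>v\<in>V. E u v \<longleftrightarrow> perm_edge \<pi> (f u) (f v)))"

definition simple_graph :: "nat set \<Rightarrow> (nat \<Rightarrow> nat \<Rightarrow> bool) \<Rightarrow> bool" where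
  "simple_graph V E \<longleftrightarrow> finite V \<and>
     (\<forall>u v. E u v \<longrightarrow> u \<in> V \<and> v \<in> V \<and> u \<noteq> v \<and> E v u)"

definition connected_graph :: "nat set \<Rightarrow> (nat \<Rightarrow> nat \<Rightarrow> bool) \<Rightarrow> bool" where
  "connected_graph V E \<longleftrightarrow> V \<noteq> {} \<and> (\<forall>u\<in>V. \<forall>v\<in>V. E\<^sup>*\<^sup>* u v)"

definition network :: "nat \<Rightarrow> nat set \<Rightarrow> (nat \<Rightarrow> nat \<Rightarrow> bool) \<Rightarrow> (nat \<Rightarrow> nat) \<Rightarrow> bool" where
  "network c V E ident \<longleftrightarrow> simple_graph V E \<and> connected_graph V E \<and>
     inj_on ident V \<and> (\<forall>v\<in>V. 1 \<le> ident v \<and> ident v \<le> card V ^ c)"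

(* One verification round: node v sees its id, its certificate, and the
   (id, certificate) pairs of its neighbours. *)
type_synonym verifier = "nat \<Rightarrow> bool list \<Rightarrow> (nat \<times> bool list) set \<Rightarrow> bool"

definition all_accept :: "verifier \<Rightarrow> nat set \<Rightarrow> (nat \<Rightarrow> nat \<Rightarrow> bool) \<Rightarrow> (nat \<Rightarrow> nat)
    \<Rightarrow> (nat \<Rightarrow> bool list) \<Rightarrow> bool" where
  "all_accept D V E ident cert \<longleftrightarrow>
     (\<forall>v\<in>V. D (ident v) (cert v) {(ident u, cert u) | u. E v u})"

end

theory Submission
  imports Defs
begin


fun en :: "nat \<Rightarrow> bool list" where
  "en k = (if k = 0 then [False] else True # odd k # en (k div 2))"

declare en.simps[simp del]

fun dn :: "bool list \<Rightarrow> (nat \<times> bool list) option" where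
  "dn [] = None"
| "dn (False # r) = Some (0, r)"
| "dn [True] = None"
| "dn (True # b # r) = (case dn r of None \<Rightarrow> None | Some (k, r') \<Rightarrow> Some ((if b then 1 else 0) + 2 * k, r'))"

lemma dn_en: "dn (en k @ r) = Some (k, r)"
proof (induction k rule: en.induct)
  case (1 k)
  show ?case
  proof (cases "k = 0")
    case True then show ?thesis by (simp add: en.simps)
  next
    case False
    then have "dn (en k @ r) = (case dn (en (k div 2) @ r) of None \<Rightarrow> None | Some (k', r') \<Rightarrow> Some ((if odd k then 1 else 0) + 2 * k', r'))"
      by (simp add: en.simps[of k])
    also have "\<dots> = Some (k, r)" using 1 False by simp
    finally show ?thesis .
  qed
qed

fun dlk :: "nat \<Rightarrow> bool list \<Rightarrow> nat list option" where
  "dlk 0 bs = (if bs = [] then Some [] else None)"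
| "dlk (Suc m) bs = (case dn bs of None \<Rightarrow> None | Some (k, r) \<Rightarrow> map_option (Cons k) (dlk m r))"

definition enl :: "nat list \<Rightarrow> bool list" where "enl ks = concat (map en ks)"

lemma dlk_enl: "length ks = m \<Longrightarrow> dlk m (enl ks) = Some ks"
proof (induction ks arbitrary: m)
  case Nil then show ?case by (simp add: enl_def)
next
  case (Cons k ks)
  then obtain m' where m: "m = Suc m'" by auto
  have "enl (k # ks) = en k @ enl ks" by (simp add: enl_def)
  then show ?case using Cons m by (simp add: dn_en)
qed

lemma dlk_length: "dlk m bs = Some r \<Longrightarrow> length r = m"
proof (induction m arbitrary: bs r)
  case 0 then show ?case by (simp split: if_splits)
next
  case (Suc m)
  then show ?case by (auto split: option.splits prod.splits)
qed

fun nb :: "nat \<Rightarrow> nat" where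
  "nb k = (if k = 0 then 0 else Suc (nb (k div 2)))"
declare nb.simps[simp del]

lemma length_en: "length (en k) = 2 * nb k + 1"
proof (induction k rule: en.induct)
  case (1 k) then show ?case by (cases "k = 0") (simp_all add: en.simps nb.simps)
qed

lemma nb_pow: "k > 0 \<Longrightarrow> 2 ^ nb k \<le> 2 * k"
proof (induction k rule: nb.induct)
  case (1 k)
  show ?case
  proof (cases "k div 2 = 0")
    case True
    then have "nb (k div 2) = 0" by (simp add: nb.simps)
    then show ?thesis using 1(2) by (simp add: nb.simps[of k])
  next
    case False
    then have "2 ^ nb (k div 2) \<le> 2 * (k div 2)" using 1 by simp
    then show ?thesis using 1(2) by (simp add: nb.simps[of k])
  qed
qed

lemma length_en_bound:
  assumes n: "n \<ge> 1" and k: "k \<le> (n + 1) ^ e"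
  shows "real (length (en k)) \<le> (2 * real e + 3) * log 2 (real n + 1)"
proof -
  have L1: "log 2 (real n + 1) \<ge> 1" using n by simp
  have L0: "log 2 (real n + 1) \<ge> 0" using L1 by simp
  show ?thesis
  proof (cases "k = 0")
    case True
    then have "length (en k) = 1" by (simp add: en.simps)
    moreover have "1 \<le> (2 * real e + 3) * log 2 (real n + 1)"
    proof -
      have "1 * 1 \<le> (2 * real e + 3) * log 2 (real n + 1)"
        using L1 by (intro mult_mono) auto
      then show ?thesis by simp
    qed
    ultimately show ?thesis by simp
  next
    case False
    have a: "2 ^ nb k \<le> 2 * k" using nb_pow[of k] False by simp
    have b: "2 * k \<le> 2 * (n + 1) ^ e" using k by simp
    have "2 ^ nb k \<le> 2 * (n + 1) ^ e" using a b by (rule le_trans)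
    then have p: "(2::real) ^ nb k \<le> 2 * (real n + 1) ^ e"
      by (metis (mono_tags, lifting) of_nat_1 of_nat_add of_nat_le_iff of_nat_mult of_nat_numeral of_nat_power)
    have "real (nb k) = log 2 (2 ^ nb k)" by (simp add: log_nat_power)
    also have "\<dots> \<le> log 2 (2 * (real n + 1) ^ e)" using p by (intro log_mono) auto
    also have "\<dots> = 1 + real e * log 2 (real n + 1)" by (simp add: log_mult log_nat_power)
    finally have q: "real (nb k) \<le> 1 + real e * log 2 (real n + 1)" .
    have "real (length (en k)) = 2 * real (nb k) + 1" by (simp add: length_en)
    also have "\<dots> \<le> 3 + 2 * real e * log 2 (real n + 1)" using q by simp
    also have "\<dots> \<le> (2 * real e + 3) * log 2 (real n + 1)" using L1 by (simp add: algebra_simps)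
    finally show ?thesis .
  qed
qed

lemma length_enl: "length (enl ks) = (\<Sum>k\<leftarrow>ks. length (en k))"
  by (simp add: enl_def length_concat comp_def)

lemma length_enl_bound:
  assumes n: "n \<ge> 1" and k: "\<forall>k\<in>set ks. k \<le> (n + 1) ^ e"
  shows "real (length (enl ks)) \<le> real (length ks) * ((2 * real e + 3) * log 2 (real n + 1))"
  using k
proof (induction ks)
  case Nil then show ?case by (simp add: enl_def)
next
  case (Cons k ks)
  have "enl (k # ks) = en k @ enl ks" by (simp add: enl_def)
  then have "real (length (enl (k # ks))) = real (length (en k)) + real (length (enl ks))" by simp
  also have "\<dots> \<le> (2 * real e + 3) * log 2 (real n + 1) + real (length ks) * ((2 * real e + 3) * log 2 (real n + 1))"
    using length_en_bound[OF n] Cons by (intro add_mono) auto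
  finally show ?case by (simp add: algebra_simps)
qed




lemma tree_sum_gen:
  assumes fin: "finite V"
    and par: "\<forall>u\<in>V. \<not> isr u \<longrightarrow> pa u \<in> V"
    and eq: "\<forall>v\<in>V. A v = g v + (\<Sum>u\<in>{u\<in>V. \<not> isr u \<and> pa u = v}. A u)"
  shows "(\<Sum>u\<in>{u\<in>V. isr u}. (A u :: nat)) = (\<Sum>v\<in>V. g v)"
proof -
  have "(\<Sum>v\<in>V. A v) = (\<Sum>v\<in>V. g v + (\<Sum>u\<in>{u\<in>V. \<not> isr u \<and> pa u = v}. A u))"
    using eq by (intro sum.cong) auto
  also have "\<dots> = (\<Sum>v\<in>V. g v) + (\<Sum>v\<in>V. \<Sum>u\<in>{u\<in>V. \<not> isr u \<and> pa u = v}. A u)"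
    by (simp add: sum.distrib)
  also have "(\<Sum>v\<in>V. \<Sum>u\<in>{u\<in>V. \<not> isr u \<and> pa u = v}. A u)
      = (\<Sum>u\<in>V. \<Sum>v\<in>{v\<in>V. \<not> isr u \<and> pa u = v}. A u)"
    by (rule sum.swap_restrict[OF fin fin])
  also have "\<dots> = (\<Sum>u\<in>V. if \<not> isr u then A u else 0)"
  proof (intro sum.cong refl)
    fix u assume u: "u \<in> V"
    show "(\<Sum>v\<in>{v\<in>V. \<not> isr u \<and> pa u = v}. A u) = (if \<not> isr u then A u else 0)"
    proof (cases "isr u")
      case True then show ?thesis by simp
    next
      case False
      then have "{v\<in>V. \<not> isr u \<and> pa u = v} = {pa u}" using par u by auto
      then show ?thesis using False by simp
    qed
  qed
  also have "\<dots> = (\<Sum>u\<in>{u\<in>V. \<not> isr u}. A u)"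
    using sum.inter_filter[OF fin, of A "\<lambda>u. \<not> isr u"] by simp
  finally have *: "(\<Sum>v\<in>V. A v) = (\<Sum>v\<in>V. g v) + (\<Sum>u\<in>{u\<in>V. \<not> isr u}. A u)" .
  have "(\<Sum>v\<in>V. A v) = (\<Sum>u\<in>{u\<in>V. isr u}. A u) + (\<Sum>u\<in>{u\<in>V. \<not> isr u}. A u)"
  proof -
    have "(\<Sum>u\<in>{u\<in>V. isr u} \<union> {u\<in>V. \<not> isr u}. A u) = (\<Sum>u\<in>{u\<in>V. isr u}. A u) + (\<Sum>u\<in>{u\<in>V. \<not> isr u}. A u)"
      by (rule sum.union_disjoint) (use fin in auto)
    moreover have "{u\<in>V. isr u} \<union> {u\<in>V. \<not> isr u} = V" by auto
    ultimately show ?thesis by simp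
  qed
  with * show ?thesis by simp
qed

lemma chain_lb:
  assumes fin: "finite V"
    and H: "\<forall>v\<in>V. x v = 0 \<or> (\<exists>p\<in>V. x p < x v \<and> (\<exists>S. S \<subseteq> {z\<in>V. x p < x z \<and> x z < x v} \<and> x v \<le> x p + 1 + card S))"
  shows "\<forall>v\<in>V. (x v :: nat) \<le> card {z\<in>V. x z < x v}"
proof -
  have "\<forall>v\<in>V. x v = k \<longrightarrow> x v \<le> card {z\<in>V. x z < x v}" for k
  proof (induction k rule: less_induct)
    case (less k)
    show ?case
    proof (intro ballI impI)
      fix v assume v: "v \<in> V" and xk: "x v = k"
      show "x v \<le> card {z\<in>V. x z < x v}"
      proof (cases "x v = 0")
        case True then show ?thesis by simp
      next
        case False
        from H v False have "\<exists>p\<in>V. x p < x v \<and> (\<exists>S. S \<subseteq> {z\<in>V. x p < x z \<and> x z < x v} \<and> x v \<le> x p + 1 + card S)"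
          using bspec[OF H v] False by simp
        then obtain p S where p: "p \<in> V" "x p < x v" and S: "S \<subseteq> {z\<in>V. x p < x z \<and> x z < x v}"
          and le: "x v \<le> x p + 1 + card S" by blast
        have IH0: "\<forall>w\<in>V. x w = x p \<longrightarrow> x w \<le> card {z\<in>V. x z < x w}"
          using less.IH[of "x p"] p xk by blast
        have IH: "x p \<le> card {z\<in>V. x z < x p}" using bspec[OF IH0 p(1)] by simp
        have "{z\<in>V. x z < x p} \<union> {p} \<union> S \<subseteq> {z\<in>V. x z < x v}" using S p by auto
        moreover have "finite {z\<in>V. x z < x v}" using fin by simp
        ultimately have "card ({z\<in>V. x z < x p} \<union> {p} \<union> S) \<le> card {z\<in>V. x z < x v}"
          by (rule card_mono[rotated])
        moreover have "card ({z\<in>V. x z < x p} \<union> {p} \<union> S) = card {z\<in>V. x z < x p} + 1 + card S"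
        proof -
          have f1: "finite {z\<in>V. x z < x p}" using fin by simp
          have f2: "finite S" by (rule finite_subset[OF S]) (use fin in simp)
          have "card ({z\<in>V. x z < x p} \<union> {p}) = card {z\<in>V. x z < x p} + 1"
            using f1 by (simp add: card_insert_if)
          moreover have "({z\<in>V. x z < x p} \<union> {p}) \<inter> S = {}" using S by auto
          ultimately show ?thesis using f1 f2 by (simp add: card_Un_disjoint)
        qed
        ultimately show ?thesis using IH le by linarith
      qed
    qed
  qed
  then show ?thesis by blast
qed

lemma lb_sum_aux:
  fixes x :: "'a \<Rightarrow> nat"
  shows "finite V \<Longrightarrow> card V = n \<Longrightarrow> \<forall>v\<in>V. x v \<le> card {z\<in>V. x z < x v} \<Longrightarrow>
    2 * sum x V \<le> n * (n - 1) \<and> (2 * sum x V = n * (n - 1) \<longrightarrow> bij_betw x V {0..<n})"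
proof (induction n arbitrary: V)
  case 0
  then have "V = {}" by simp
  then show ?case by (simp add: bij_betw_def)
next
  case (Suc n)
  then have ne: "V \<noteq> {}" by auto
  have fin: "finite V" using Suc.prems by simp
  define m where "m = (SOME m. m \<in> V \<and> x m = Max (x ` V))"
  have "\<exists>m. m \<in> V \<and> x m = Max (x ` V)"
  proof -
    have "Max (x ` V) \<in> x ` V" using Max_in[of "x ` V"] fin ne by simp
    then show ?thesis by (metis imageE)
  qed
  then have m: "m \<in> V" "x m = Max (x ` V)" unfolding m_def by (metis (mono_tags, lifting) someI_ex)+
  have mmax: "\<forall>z\<in>V. x z \<le> x m" using m fin by simp
  define V' where "V' = V - {m}"
  have cV': "card V' = n" using Suc.prems m unfolding V'_def by simp
  have fV': "finite V'" using fin unfolding V'_def by simp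
  have hyp': "\<forall>v\<in>V'. x v \<le> card {z\<in>V'. x z < x v}"
  proof
    fix v assume v: "v \<in> V'"
    have "{z\<in>V'. x z < x v} = {z\<in>V. x z < x v}"
      using v mmax unfolding V'_def by auto
    moreover have "x v \<le> card {z\<in>V. x z < x v}" using Suc.prems(3) v unfolding V'_def by simp
    ultimately show "x v \<le> card {z\<in>V'. x z < x v}" by simp
  qed
  have IH: "2 * sum x V' \<le> n * (n - 1) \<and> (2 * sum x V' = n * (n - 1) \<longrightarrow> bij_betw x V' {0..<n})"
    using Suc.IH[OF fV' cV' hyp'] .
  have xm: "x m \<le> n"
  proof -
    have "{z\<in>V. x z < x m} \<subseteq> V'" unfolding V'_def by auto
    then have "card {z\<in>V. x z < x m} \<le> card V'" using fV' by (rule card_mono[rotated])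
    then show ?thesis using Suc.prems(3) m(1) cV' by (metis le_trans)
  qed
  have sV: "sum x V = x m + sum x V'"
    unfolding V'_def using fin m(1) by (simp add: sum.remove)
  have le: "2 * sum x V \<le> Suc n * (Suc n - 1)"
  proof -
    have "2 * sum x V = 2 * x m + 2 * sum x V'" using sV by simp
    also have "\<dots> \<le> 2 * n + n * (n - 1)" using IH xm by simp
    also have "\<dots> = Suc n * (Suc n - 1)" by (cases n) (auto simp: algebra_simps)
    finally show ?thesis .
  qed
  moreover have "2 * sum x V = Suc n * (Suc n - 1) \<longrightarrow> bij_betw x V {0..<Suc n}"
  proof
    assume eq: "2 * sum x V = Suc n * (Suc n - 1)"
    have e1: "Suc n * (Suc n - 1) = 2 * n + n * (n - 1)" by (cases n) (auto simp: algebra_simps)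
    have "2 * x m + 2 * sum x V' = 2 * n + n * (n - 1)" using eq sV e1 by simp
    then have xmn: "x m = n" and s': "2 * sum x V' = n * (n - 1)" using IH xm by linarith+
    have b': "bij_betw x V' {0..<n}" using IH s' by simp
    have "bij_betw x (V' \<union> {m}) ({0..<n} \<union> {x m})"
      using notIn_Un_bij_betw3[of m V' x "{0..<n}"] b' xmn unfolding V'_def by simp
    moreover have "V' \<union> {m} = V" using m(1) unfolding V'_def by auto
    moreover have "{0..<n} \<union> {x m} = {0..<Suc n}" using xmn by auto
    ultimately show "bij_betw x V {0..<Suc n}" by simp
  qed
  ultimately show ?case by simp
qed

lemma lb_sum_bij:
  fixes x :: "'a \<Rightarrow> nat"
  assumes "finite V" "\<forall>v\<in>V. x v \<le> card {z\<in>V. x z < x v}" "2 * sum x V = card V * (card V - 1)"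
  shows "bij_betw x V {0..<card V}"
  using lb_sum_aux[OF assms(1) refl assms(2)] assms(3) by simp

lemma bij_rank:
  fixes x :: "'a \<Rightarrow> nat"
  assumes b: "bij_betw x V {0..<n}" and v: "v \<in> V"
  shows "card {z\<in>V. x z < x v} = x v"
proof -
  have inj: "inj_on x {z\<in>V. x z < x v}" using b unfolding bij_betw_def by (auto intro: inj_on_subset)
  have xv: "x v < n" using b v unfolding bij_betw_def by auto
  have "x ` {z\<in>V. x z < x v} = {0..<x v}"
  proof
    show "x ` {z\<in>V. x z < x v} \<subseteq> {0..<x v}" by auto
    show "{0..<x v} \<subseteq> x ` {z\<in>V. x z < x v}"
    proof
      fix k assume k: "k \<in> {0..<x v}"
      then have "k \<in> x ` V" using b xv unfolding bij_betw_def by auto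
      then obtain z where "z \<in> V" "k = x z" by auto
      then show "k \<in> x ` {z\<in>V. x z < x v}" using k by auto
    qed
  qed
  then show ?thesis using card_image[OF inj] by simp
qed

definition disc :: "('a \<Rightarrow> nat) \<Rightarrow> ('a \<Rightarrow> nat) \<Rightarrow> 'a \<Rightarrow> 'a \<Rightarrow> bool" where
  "disc x y u v \<longleftrightarrow> (x u < x v \<and> y v < y u) \<or> (x v < x u \<and> y u < y v)"

lemma disc_sym: "disc x y u v = disc x y v u" unfolding disc_def by auto

lemma bij_diff:
  fixes x y :: "'a \<Rightarrow> nat"
  assumes fin: "finite V" and bx: "bij_betw x V {0..<n}" and bY: "bij_betw y V {0..<n}" and v: "v \<in> V"
  shows "int (card {z\<in>V. x z < x v \<and> y v < y z}) - int (card {z\<in>V. x v < x z \<and> y z < y v}) = int (x v) - int (y v)"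
proof -
  have iy: "inj_on y V" using bY by (simp add: bij_betw_def)
  have ix: "inj_on x V" using bx by (simp add: bij_betw_def)
  have e1: "{z\<in>V. x z < x v} = {z\<in>V. x z < x v \<and> y v < y z} \<union> {z\<in>V. x z < x v \<and> y z < y v}"
  proof -
    have "z \<in> V \<Longrightarrow> x z < x v \<Longrightarrow> y z \<noteq> y v" for z using iy v by (metis inj_on_contraD less_irrefl)
    then show ?thesis by (auto simp: linorder_neq_iff)
  qed
  have e2: "{z\<in>V. y z < y v} = {z\<in>V. x v < x z \<and> y z < y v} \<union> {z\<in>V. x z < x v \<and> y z < y v}"
  proof -
    have "z \<in> V \<Longrightarrow> y z < y v \<Longrightarrow> x z \<noteq> x v" for z using ix v by (metis inj_on_contraD less_irrefl)
    then show ?thesis by (auto simp: linorder_neq_iff)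
  qed
  have c1: "x v = card {z\<in>V. x z < x v \<and> y v < y z} + card {z\<in>V. x z < x v \<and> y z < y v}"
    using bij_rank[OF bx v] e1 fin by (simp add: card_Un_disjoint disjoint_iff)
  have c2: "y v = card {z\<in>V. x v < x z \<and> y z < y v} + card {z\<in>V. x z < x v \<and> y z < y v}"
    using bij_rank[OF bY v] e2 fin by (simp add: card_Un_disjoint disjoint_iff)
  show ?thesis using c1 c2 by simp
qed

lemma edges_complete:
  fixes x y :: "'a \<Rightarrow> nat"
  assumes fin: "finite V" and bx: "bij_betw x V {0..<n}" and bY: "bij_betw y V {0..<n}"
    and sym: "\<forall>u v. E u v \<longrightarrow> u \<in> V \<and> v \<in> V \<and> E v u"
    and sub: "\<forall>u v. E u v \<longrightarrow> disc x y u v"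
    and bal: "\<forall>v\<in>V. int (card {u. E v u \<and> x u < x v}) - int (card {u. E v u \<and> x v < x u}) = int (x v) - int (y v)"
  shows "\<forall>u\<in>V. \<forall>v\<in>V. disc x y u v \<longrightarrow> E u v"
proof (rule ccontr)
  assume "\<not> ?thesis"
  then obtain u0 v0 where u0: "u0 \<in> V" "v0 \<in> V" "disc x y u0 v0" "\<not> E u0 v0" by blast
  define I where "I = {v\<in>V. \<exists>u\<in>V. disc x y u v \<and> \<not> E u v}"
  have finI: "finite I" using fin unfolding I_def by simp
  have neI: "I \<noteq> {}" using u0 unfolding I_def by blast
  have "Min (x ` I) \<in> x ` I" using finI neI by simp
  then obtain v where vI: "v \<in> I" and vmin: "x v = Min (x ` I)" by (metis imageE)
  have vmin': "\<forall>w\<in>I. x v \<le> x w" using vmin finI by simp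
  have vV: "v \<in> V" using vI unfolding I_def by simp
  define L1 where "L1 = {z\<in>V. x z < x v \<and> y v < y z}"
  define R1 where "R1 = {z\<in>V. x v < x z \<and> y z < y v}"
  define a where "a = {u. E v u \<and> x u < x v}"
  define b where "b = {u. E v u \<and> x v < x u}"
  have h1: "y v < y u \<and> u \<in> V" if "E v u" "x u < x v" for u
  proof -
    have "disc x y v u" using sub that(1) by simp
    then show ?thesis using that sym unfolding disc_def by auto
  qed
  have h2: "y u < y v \<and> u \<in> V" if "E v u" "x v < x u" for u
  proof -
    have "disc x y v u" using sub that(1) by simp
    then show ?thesis using that sym unfolding disc_def by auto
  qed
  have aL: "a \<subseteq> L1" using h1 unfolding a_def L1_def by auto
  have bR: "b \<subseteq> R1" using h2 unfolding b_def R1_def by auto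
  have fL: "finite L1" "finite R1" using fin unfolding L1_def R1_def by simp_all
  have eqd: "int (card L1) - int (card a) = int (card R1) - int (card b)"
    using bij_diff[OF fin bx bY vV] bspec[OF bal vV] unfolding L1_def R1_def a_def b_def by simp
  have Lempty: "L1 - a = {}"
  proof (rule ccontr)
    assume "L1 - a \<noteq> {}"
    then obtain u where u: "u \<in> L1" "u \<notin> a" by blast
    have uV: "u \<in> V" and xu: "x u < x v" and yu: "y v < y u" using u(1) unfolding L1_def by auto
    have nE: "\<not> E v u" using u(2) xu unfolding a_def by simp
    have "disc x y v u" using xu yu unfolding disc_def by simp
    then have "u \<in> I" using uV vV nE unfolding I_def by blast
    then show False using vmin' xu by force
  qed
  have "card L1 = card a" using Lempty aL fL by (metis Diff_eq_empty_iff subset_antisym)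
  then have "card R1 = card b" using eqd by simp
  then have Rb: "R1 = b" using bR fL by (metis card_subset_eq)
  from vI obtain u where uV: "u \<in> V" and du: "disc x y u v" and nE: "\<not> E u v" unfolding I_def by blast
  have nE': "\<not> E v u" using nE sym by blast
  show False
  proof (cases "x u < x v")
    case True
    then have "y v < y u" using du unfolding disc_def by auto
    then have "u \<in> L1 - a" using True uV nE' unfolding L1_def a_def by simp
    then show False using Lempty by simp
  next
    case False
    then have "x v < x u \<and> y u < y v" using du unfolding disc_def by auto
    then have "u \<in> R1" using uV unfolding R1_def by simp
    then have "E v u" using Rb unfolding b_def by simp
    then show False using nE' by simp
  qed
qed




definition fRT :: "nat list \<Rightarrow> nat" where "fRT r = r!0"
definition fNN :: "nat list \<Rightarrow> nat" where "fNN r = r!1"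
definition fPAR :: "nat list \<Rightarrow> nat" where "fPAR r = r!2"
definition fSZ :: "nat list \<Rightarrow> nat" where "fSZ r = r!3"
definition fSX :: "nat list \<Rightarrow> nat" where "fSX r = r!4"
definition fSY :: "nat list \<Rightarrow> nat" where "fSY r = r!5"
definition fX :: "nat list \<Rightarrow> nat" where "fX r = r!6"
definition fY :: "nat list \<Rightarrow> nat" where "fY r = r!7"
definition fM :: "nat \<Rightarrow> nat list \<Rightarrow> nat" where "fM k r = r!k"
definition fP :: "nat \<Rightarrow> nat list \<Rightarrow> nat" where "fP k r = r!(k+1)"
definition fW :: "nat \<Rightarrow> nat list \<Rightarrow> nat" where "fW k r = r!(k+2)"
definition fC :: "nat \<Rightarrow> nat list \<Rightarrow> nat" where "fC k r = r!(k+3)"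
definition fFX :: "nat \<Rightarrow> nat list \<Rightarrow> nat" where "fFX k r = r!(k+4)"
definition fFN :: "nat \<Rightarrow> nat list \<Rightarrow> nat" where "fFN k r = r!(k+5)"

definition CH :: "nat \<Rightarrow> nat list \<Rightarrow> (nat \<times> nat list) set \<Rightarrow> (nat list \<Rightarrow> nat) \<Rightarrow> (nat list \<Rightarrow> nat) \<Rightarrow> nat \<Rightarrow> bool" where
"CH i r NB X Y k \<longleftrightarrow>
  fM k r \<le> 2 \<and>
  (fM k r = 0 \<longrightarrow> X r = 0) \<and>
  (fM k r = 1 \<longrightarrow> (\<exists>p\<in>NB. fst p = fP k r \<and> X (snd p) < X r \<and>
        fC k r = card {q\<in>NB. X (snd p) < X (snd q) \<and> X (snd q) < X r \<and> Y r < Y (snd q)})) \<and>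
  (fM k r = 2 \<longrightarrow> (\<exists>p\<in>NB. fst p = fW k r)) \<and>
  (\<forall>p\<in>NB. fM k (snd p) = 1 \<and> fP k (snd p) = i \<longrightarrow>
       X (snd p) = X r + 1 + fC k (snd p) + card {q\<in>NB. X r < X (snd q) \<and> X (snd q) < X (snd p) \<and> Y (snd q) < Y (snd p)}) \<and>
  fFN k r = card {q\<in>NB. X r < X (snd q) \<and> X (snd q) < fFX k r} \<and>
  (\<forall>p\<in>NB. fM k (snd p) = 2 \<and> fW k (snd p) = i \<longrightarrow>
       (\<exists>q\<in>NB. fst q = fP k (snd p) \<and> X (snd q) < X (snd p) \<and> fFX k (snd q) = X (snd p) \<and> X (snd p) = X (snd q) + 1 + fFN k (snd q)))"

definition children :: "nat \<Rightarrow> (nat \<times> nat list) set \<Rightarrow> (nat \<times> nat list) set" where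
  "children i NB = {p\<in>NB. fPAR (snd p) = i \<and> fst p \<noteq> fRT (snd p)}"

definition LOC :: "nat \<Rightarrow> nat list \<Rightarrow> (nat \<times> nat list) set \<Rightarrow> bool" where
"LOC i r NB \<longleftrightarrow>
  (\<forall>p\<in>NB. fRT (snd p) = fRT r \<and> fNN (snd p) = fNN r) \<and>
  (if i = fRT r then fSZ r = fNN r \<and> 2 * fSX r = fNN r * (fNN r - 1) \<and> 2 * fSY r = fNN r * (fNN r - 1)
   else (\<exists>p\<in>NB. fst p = fPAR r)) \<and>
  fSZ r = 1 + (\<Sum>p\<in>children i NB. fSZ (snd p)) \<and>
  fSX r = fX r + (\<Sum>p\<in>children i NB. fSX (snd p)) \<and>
  fSY r = fY r + (\<Sum>p\<in>children i NB. fSY (snd p)) \<and>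
  (\<forall>p\<in>NB. (fX (snd p) < fX r \<and> fY r < fY (snd p)) \<or> (fX r < fX (snd p) \<and> fY (snd p) < fY r)) \<and>
  int (card {p\<in>NB. fX (snd p) < fX r}) - int (card {p\<in>NB. fX r < fX (snd p)}) = int (fX r) - int (fY r) \<and>
  CH i r NB fX fY 8 \<and> CH i r NB fY fX 14"

definition DV :: verifier where
  "DV i c S \<longleftrightarrow> (case dlk 20 c of None \<Rightarrow> False | Some r \<Rightarrow>
      (\<forall>p\<in>S. dlk 20 (snd p) \<noteq> None) \<and> LOC i r ((\<lambda>p. (fst p, the (dlk 20 (snd p)))) ` S))"

lemma ball_img: "(\<forall>p\<in>(\<lambda>u. (g u, F u)) ` U. P p) = (\<forall>u\<in>U. P (g u, F u))" by auto
lemma bex_img: "(\<exists>p\<in>(\<lambda>u. (g u, F u)) ` U. P p) = (\<exists>u\<in>U. P (g u, F u))" by auto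

lemma card_img:
  assumes "inj_on g U"
  shows "card {p\<in>(\<lambda>u. (g u, F u)) ` U. P p} = card {u\<in>U. P (g u, F u)}"
proof -
  have e: "{p\<in>(\<lambda>u. (g u, F u)) ` U. P p} = (\<lambda>u. (g u, F u)) ` {u\<in>U. P (g u, F u)}" by auto
  have "inj_on (\<lambda>u. (g u, F u)) {u\<in>U. P (g u, F u)}"
    using assms by (auto simp: inj_on_def)
  then show ?thesis unfolding e by (rule card_image)
qed

lemma sum_img:
  assumes "inj_on g U"
  shows "(\<Sum>p\<in>{p\<in>(\<lambda>u. (g u, F u)) ` U. P p}. h (snd p)) = (\<Sum>u\<in>{u\<in>U. P (g u, F u)}. h (F u))"
proof -
  have e: "{p\<in>(\<lambda>u. (g u, F u)) ` U. P p} = (\<lambda>u. (g u, F u)) ` {u\<in>U. P (g u, F u)}" by auto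
  have "inj_on (\<lambda>u. (g u, F u)) {u\<in>U. P (g u, F u)}"
    using assms by (auto simp: inj_on_def)
  then show ?thesis unfolding e by (simp add: sum.reindex)
qed

locale gctx =
  fixes V :: "nat set" and E :: "nat \<Rightarrow> nat \<Rightarrow> bool" and ident :: "nat \<Rightarrow> nat" and F :: "nat \<Rightarrow> nat list"
  assumes fin: "finite V" and ne: "V \<noteq> {}"
    and sym: "\<forall>u v. E u v \<longrightarrow> u \<in> V \<and> v \<in> V \<and> u \<noteq> v \<and> E v u"
    and conn: "\<forall>u\<in>V. \<forall>v\<in>V. E\<^sup>*\<^sup>* u v"
    and inj: "inj_on ident V"
begin

definition NB :: "nat \<Rightarrow> (nat \<times> nat list) set" where
  "NB v = (\<lambda>u. (ident u, F u)) ` {u. E v u}"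

lemma E_V1: "E u v \<Longrightarrow> u \<in> V" using sym by blast
lemma E_V2: "E u v \<Longrightarrow> v \<in> V" using sym by blast
lemma E_sym: "E u v \<Longrightarrow> E v u" using sym by blast
lemma E_ne: "E u v \<Longrightarrow> u \<noteq> v" using sym by blast
lemma nbV: "{u. E v u} \<subseteq> V" using E_V2 by auto
lemma injN: "inj_on ident {u. E v u}" using inj nbV by (rule inj_on_subset)
lemma finN: "finite {u. E v u}" using fin nbV by (rule finite_subset[rotated])

lemma ballN: "(\<forall>p\<in>NB v. P p) = (\<forall>u. E v u \<longrightarrow> P (ident u, F u))"
  unfolding NB_def by auto
lemma bexN: "(\<exists>p\<in>NB v. P p) = (\<exists>u. E v u \<and> P (ident u, F u))"
  unfolding NB_def by auto
lemma cardN: "card {p\<in>NB v. P p} = card {u. E v u \<and> P (ident u, F u)}"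
  unfolding NB_def using card_img[OF injN, where F=F and P=P] by simp
lemma sumN: "(\<Sum>p\<in>{p\<in>NB v. P p}. h (snd p)) = (\<Sum>u\<in>{u. E v u \<and> P (ident u, F u)}. h (F u))"
  unfolding NB_def using sum_img[OF injN, where F=F and P=P and h=h] by simp

lemma const_prop:
  assumes "\<forall>a b. E a b \<longrightarrow> g a = g b" and "u \<in> V" "v \<in> V"
  shows "g u = g v"
proof -
  have "E\<^sup>*\<^sup>* u v" using conn assms(2,3) by simp
  then show ?thesis
    by (induction rule: rtranclp_induct) (use assms(1) in auto)
qed


lemma chain_from_CH:
  assumes ch: "\<forall>v\<in>V. CH (ident v) (F v) (NB v) X Y k"
  shows "\<forall>v\<in>V. X (F v) = 0 \<or> (\<exists>p\<in>V. X (F p) < X (F v) \<and> (\<exists>S. S \<subseteq> {z\<in>V. X (F p) < X (F z) \<and> X (F z) < X (F v)} \<and> X (F v) \<le> X (F p) + 1 + card S))"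
proof
  fix v assume vV: "v \<in> V"
  have chv: "CH (ident v) (F v) (NB v) X Y k" using ch vV by simp
  show "X (F v) = 0 \<or> (\<exists>p\<in>V. X (F p) < X (F v) \<and> (\<exists>S. S \<subseteq> {z\<in>V. X (F p) < X (F z) \<and> X (F z) < X (F v)} \<and> X (F v) \<le> X (F p) + 1 + card S))"
  proof (cases "fM k (F v) = 0")
    case True then show ?thesis using chv unfolding CH_def by simp
  next
    case M0: False
    show ?thesis
    proof (cases "fM k (F v) = 1")
      case M1: True
      have "\<exists>p\<in>NB v. fst p = fP k (F v) \<and> X (snd p) < X (F v) \<and>
        fC k (F v) = card {q\<in>NB v. X (snd p) < X (snd q) \<and> X (snd q) < X (F v) \<and> Y (F v) < Y (snd q)}"
        using chv M1 unfolding CH_def by simp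
      then obtain u where Evu: "E v u" and iu: "ident u = fP k (F v)" and xu: "X (F u) < X (F v)"
        and cv: "fC k (F v) = card {q\<in>NB v. X (F u) < X (snd q) \<and> X (snd q) < X (F v) \<and> Y (F v) < Y (snd q)}"
        unfolding bexN by auto
      have uV: "u \<in> V" using Evu E_V2 by blast
      have Euv: "E u v" using Evu E_sym by blast
      have chu: "CH (ident u) (F u) (NB u) X Y k" using ch uV by simp
      have "\<forall>p\<in>NB u. fM k (snd p) = 1 \<and> fP k (snd p) = ident u \<longrightarrow>
       X (snd p) = X (F u) + 1 + fC k (snd p) + card {q\<in>NB u. X (F u) < X (snd q) \<and> X (snd q) < X (snd p) \<and> Y (snd q) < Y (snd p)}"
        using chu unfolding CH_def by simp
      then have eq: "X (F v) = X (F u) + 1 + fC k (F v) + card {q\<in>NB u. X (F u) < X (snd q) \<and> X (snd q) < X (F v) \<and> Y (snd q) < Y (F v)}"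
        unfolding ballN using Euv M1 iu by simp
      define S1 where "S1 = {z. E v z \<and> X (F u) < X (F z) \<and> X (F z) < X (F v) \<and> Y (F v) < Y (F z)}"
      define S2 where "S2 = {z. E u z \<and> X (F u) < X (F z) \<and> X (F z) < X (F v) \<and> Y (F z) < Y (F v)}"
      have c1: "fC k (F v) = card S1" using cv unfolding cardN S1_def by simp
      have c2: "card {q\<in>NB u. X (F u) < X (snd q) \<and> X (snd q) < X (F v) \<and> Y (snd q) < Y (F v)} = card S2"
        unfolding cardN S2_def by simp
      have f1: "finite S1" unfolding S1_def using finN[of v] by (rule finite_subset[rotated]) auto
      have f2: "finite S2" unfolding S2_def using finN[of u] by (rule finite_subset[rotated]) auto
      have dj: "S1 \<inter> S2 = {}" unfolding S1_def S2_def by auto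
      have cS: "card (S1 \<union> S2) = card S1 + card S2" using f1 f2 dj by (rule card_Un_disjoint)
      have sub: "S1 \<union> S2 \<subseteq> {z\<in>V. X (F u) < X (F z) \<and> X (F z) < X (F v)}"
        unfolding S1_def S2_def using E_V2 by auto
      have "X (F v) \<le> X (F u) + 1 + card (S1 \<union> S2)" using eq c1 c2 cS by simp
      then show ?thesis using uV xu sub by blast
    next
      case M1: False
      then have M2: "fM k (F v) = 2" using M0 chv unfolding CH_def by simp
      have "\<exists>p\<in>NB v. fst p = fW k (F v)" using chv M2 unfolding CH_def by simp
      then obtain w where Evw: "E v w" and iw: "ident w = fW k (F v)" unfolding bexN by auto
      have wV: "w \<in> V" and Ewv: "E w v" using Evw E_V2 E_sym by blast+
      have chw: "CH (ident w) (F w) (NB w) X Y k" using ch wV by simp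
      have "\<forall>p\<in>NB w. fM k (snd p) = 2 \<and> fW k (snd p) = ident w \<longrightarrow>
       (\<exists>q\<in>NB w. fst q = fP k (snd p) \<and> X (snd q) < X (snd p) \<and> fFX k (snd q) = X (snd p) \<and> X (snd p) = X (snd q) + 1 + fFN k (snd q))"
        using chw unfolding CH_def by simp
      then have "\<exists>q\<in>NB w. fst q = fP k (F v) \<and> X (snd q) < X (F v) \<and> fFX k (snd q) = X (F v) \<and> X (F v) = X (snd q) + 1 + fFN k (snd q)"
        unfolding ballN using Ewv M2 iw by simp
      then obtain p where Ewp: "E w p" and xp: "X (F p) < X (F v)" and fx: "fFX k (F p) = X (F v)"
        and eq: "X (F v) = X (F p) + 1 + fFN k (F p)" unfolding bexN by auto
      have pV: "p \<in> V" using Ewp E_V2 by blast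
      have chp: "CH (ident p) (F p) (NB p) X Y k" using ch pV by simp
      have "fFN k (F p) = card {q\<in>NB p. X (F p) < X (snd q) \<and> X (snd q) < fFX k (F p)}"
        using chp unfolding CH_def by simp
      then have cn: "fFN k (F p) = card {z. E p z \<and> X (F p) < X (F z) \<and> X (F z) < X (F v)}"
        unfolding cardN fx by simp
      have sub: "{z. E p z \<and> X (F p) < X (F z) \<and> X (F z) < X (F v)} \<subseteq> {z\<in>V. X (F p) < X (F z) \<and> X (F z) < X (F v)}"
        using E_V2 by auto
      show ?thesis using pV xp sub eq cn by (metis (no_types, lifting) order_refl)
    qed
  qed
qed


end

locale acc_ctx = gctx +
  assumes loc: "\<forall>v\<in>V. LOC (ident v) (F v) ((\<lambda>u. (ident u, F u)) ` {u. E v u})"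
begin

lemma locv: "v \<in> V \<Longrightarrow> LOC (ident v) (F v) (NB v)"
  using loc unfolding NB_def by simp

definition isr :: "nat \<Rightarrow> bool" where "isr u \<longleftrightarrow> ident u = fRT (F u)"
definition pa :: "nat \<Rightarrow> nat" where "pa u = (THE w. E u w \<and> ident w = fPAR (F u))"

lemma locD:
  assumes "v \<in> V"
  shows "\<forall>p\<in>NB v. fRT (snd p) = fRT (F v) \<and> fNN (snd p) = fNN (F v)"
    and "if ident v = fRT (F v) then fSZ (F v) = fNN (F v) \<and> 2 * fSX (F v) = fNN (F v) * (fNN (F v) - 1) \<and> 2 * fSY (F v) = fNN (F v) * (fNN (F v) - 1)
   else (\<exists>p\<in>NB v. fst p = fPAR (F v))"
    and "fSZ (F v) = 1 + (\<Sum>p\<in>children (ident v) (NB v). fSZ (snd p))"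
    and "fSX (F v) = fX (F v) + (\<Sum>p\<in>children (ident v) (NB v). fSX (snd p))"
    and "fSY (F v) = fY (F v) + (\<Sum>p\<in>children (ident v) (NB v). fSY (snd p))"
    and "\<forall>p\<in>NB v. (fX (snd p) < fX (F v) \<and> fY (F v) < fY (snd p)) \<or> (fX (F v) < fX (snd p) \<and> fY (snd p) < fY (F v))"
    and "int (card {p\<in>NB v. fX (snd p) < fX (F v)}) - int (card {p\<in>NB v. fX (F v) < fX (snd p)}) = int (fX (F v)) - int (fY (F v))"
    and "CH (ident v) (F v) (NB v) fX fY 8" and "CH (ident v) (F v) (NB v) fY fX 14"
  using locv[OF assms] unfolding LOC_def apply -
  apply (elim conjE, assumption)+
  done

lemma RT_const: "u \<in> V \<Longrightarrow> v \<in> V \<Longrightarrow> fRT (F u) = fRT (F v)"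
proof (rule const_prop[where g="\<lambda>u. fRT (F u)"])
  show "\<forall>a b. E a b \<longrightarrow> fRT (F a) = fRT (F b)"
  proof (intro allI impI)
    fix a b assume ab: "E a b"
    then have aV: "a \<in> V" using E_V1 by blast
    have "\<forall>p\<in>NB a. fRT (snd p) = fRT (F a) \<and> fNN (snd p) = fNN (F a)" using locD(1)[OF aV] .
    then show "fRT (F a) = fRT (F b)" unfolding ballN using ab by simp
  qed
qed

lemma NN_const: "u \<in> V \<Longrightarrow> v \<in> V \<Longrightarrow> fNN (F u) = fNN (F v)"
proof (rule const_prop[where g="\<lambda>u. fNN (F u)"])
  show "\<forall>a b. E a b \<longrightarrow> fNN (F a) = fNN (F b)"
  proof (intro allI impI)
    fix a b assume ab: "E a b"
    then have aV: "a \<in> V" using E_V1 by blast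
    have "\<forall>p\<in>NB a. fRT (snd p) = fRT (F a) \<and> fNN (snd p) = fNN (F a)" using locD(1)[OF aV] .
    then show "fNN (F a) = fNN (F b)" unfolding ballN using ab by simp
  qed
qed

lemma pa_prop:
  assumes uV: "u \<in> V" and nr: "\<not> isr u"
  shows "E u (pa u) \<and> ident (pa u) = fPAR (F u)"
proof -
  have "\<exists>p\<in>NB u. fst p = fPAR (F u)" using locD(2)[OF uV] nr unfolding isr_def by simp
  then obtain w where w: "E u w" "ident w = fPAR (F u)" unfolding bexN by auto
  have wV: "w \<in> V" using w(1) E_V2 by blast
  have uniq: "w' = w" if "E u w' \<and> ident w' = fPAR (F u)" for w'
  proof -
    have w'V: "w' \<in> V" using that E_V2 by blast
    have "ident w' = ident w" using that w(2) by simp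
    then show ?thesis using inj w'V wV by (simp add: inj_on_eq_iff)
  qed
  have "E u (pa u) \<and> ident (pa u) = fPAR (F u)"
    unfolding pa_def
  proof (rule theI[of _ w])
    show "E u w \<and> ident w = fPAR (F u)" using w by simp
    show "\<And>x. E u x \<and> ident x = fPAR (F u) \<Longrightarrow> x = w" using uniq by blast
  qed
  then show ?thesis .
qed

lemma children_eq:
  assumes vV: "v \<in> V"
  shows "(\<Sum>p\<in>children (ident v) (NB v). h (snd p)) = (\<Sum>u\<in>{u\<in>V. \<not> isr u \<and> pa u = v}. h (F u))"
proof -
  have "(\<Sum>p\<in>children (ident v) (NB v). h (snd p)) = (\<Sum>u\<in>{u. E v u \<and> fPAR (F u) = ident v \<and> ident u \<noteq> fRT (F u)}. h (F u))"
    unfolding children_def using sumN[where v=v and P="\<lambda>p. fPAR (snd p) = ident v \<and> fst p \<noteq> fRT (snd p)" and h=h] by simp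
  also have "{u. E v u \<and> fPAR (F u) = ident v \<and> ident u \<noteq> fRT (F u)} = {u\<in>V. \<not> isr u \<and> pa u = v}"
  proof (intro equalityI subsetI)
    fix u assume "u \<in> {u. E v u \<and> fPAR (F u) = ident v \<and> ident u \<noteq> fRT (F u)}"
    then have u: "E v u" "fPAR (F u) = ident v" "\<not> isr u" unfolding isr_def by auto
    have uV: "u \<in> V" and Euv: "E u v" using u(1) E_V2 E_sym by blast+
    have pp: "E u (pa u) \<and> ident (pa u) = fPAR (F u)" using pa_prop[OF uV u(3)] .
    have "pa u \<in> V" using pp E_V2 by blast
    then have "pa u = v" using pp u(2) inj vV by (metis inj_onD)
    then show "u \<in> {u\<in>V. \<not> isr u \<and> pa u = v}" using uV u(3) by simp
  next
    fix u assume "u \<in> {u\<in>V. \<not> isr u \<and> pa u = v}"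
    then have u: "u \<in> V" "\<not> isr u" "pa u = v" by auto
    have pp: "E u (pa u) \<and> ident (pa u) = fPAR (F u)" using pa_prop[OF u(1,2)] .
    then show "u \<in> {u. E v u \<and> fPAR (F u) = ident v \<and> ident u \<noteq> fRT (F u)}"
      using u E_sym unfolding isr_def by auto
  qed
  finally show ?thesis .
qed

lemma root_exists: "\<exists>rt\<in>V. isr rt \<and> fSZ (F rt) = card V \<and> fSX (F rt) = (\<Sum>v\<in>V. fX (F v)) \<and> fSY (F rt) = (\<Sum>v\<in>V. fY (F v))"
proof -
  have pV: "\<forall>u\<in>V. \<not> isr u \<longrightarrow> pa u \<in> V" using pa_prop E_V2 by blast
  have t1: "(\<Sum>u\<in>{u\<in>V. isr u}. fSZ (F u)) = (\<Sum>v\<in>V. 1)"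
  proof (rule tree_sum_gen[OF fin pV], intro ballI)
    fix v assume v: "v \<in> V"
    show "fSZ (F v) = (\<lambda>v. 1) v + (\<Sum>u\<in>{u\<in>V. \<not> isr u \<and> pa u = v}. fSZ (F u))"
      using locD(3)[OF v] children_eq[OF v, of fSZ] by simp
  qed
  have t2: "(\<Sum>u\<in>{u\<in>V. isr u}. fSX (F u)) = (\<Sum>v\<in>V. fX (F v))"
  proof (rule tree_sum_gen[OF fin pV], intro ballI)
    fix v assume v: "v \<in> V"
    show "fSX (F v) = (\<lambda>v. fX (F v)) v + (\<Sum>u\<in>{u\<in>V. \<not> isr u \<and> pa u = v}. fSX (F u))"
      using locD(4)[OF v] children_eq[OF v, of fSX] by simp
  qed
  have t3: "(\<Sum>u\<in>{u\<in>V. isr u}. fSY (F u)) = (\<Sum>v\<in>V. fY (F v))"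
  proof (rule tree_sum_gen[OF fin pV], intro ballI)
    fix v assume v: "v \<in> V"
    show "fSY (F v) = (\<lambda>v. fY (F v)) v + (\<Sum>u\<in>{u\<in>V. \<not> isr u \<and> pa u = v}. fSY (F u))"
      using locD(5)[OF v] children_eq[OF v, of fSY] by simp
  qed
  have "{u\<in>V. isr u} \<noteq> {}"
  proof
    assume e: "{u\<in>V. isr u} = {}"
    have "card V = 0" using t1 unfolding e by simp
    then show False using fin ne by simp
  qed
  then obtain rt where rt: "rt \<in> V" "isr rt" by auto
  have "{u\<in>V. isr u} = {rt}"
  proof (intro equalityI subsetI)
    fix u assume "u \<in> {u\<in>V. isr u}"
    then have u: "u \<in> V" "ident u = fRT (F u)" unfolding isr_def by auto
    have "ident rt = fRT (F rt)" using rt unfolding isr_def by simp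
    then have "ident u = ident rt" using u RT_const[OF u(1) rt(1)] by simp
    then show "u \<in> {rt}" using inj u(1) rt(1) by (simp add: inj_on_eq_iff)
  qed (use rt in auto)
  then show ?thesis using t1 t2 t3 rt by auto
qed


lemma sound: "is_permutation_graph V E"
proof -
  define n where "n = card V"
  define x where "x = (\<lambda>v. fX (F v))"
  define y where "y = (\<lambda>v. fY (F v))"
  obtain rt where rt: "rt \<in> V" "isr rt" "fSZ (F rt) = card V" "fSX (F rt) = (\<Sum>v\<in>V. fX (F v))"
    "fSY (F rt) = (\<Sum>v\<in>V. fY (F v))" using root_exists by blast
  have rb: "fSZ (F rt) = fNN (F rt) \<and> 2 * fSX (F rt) = fNN (F rt) * (fNN (F rt) - 1) \<and> 2 * fSY (F rt) = fNN (F rt) * (fNN (F rt) - 1)"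
    using locD(2)[OF rt(1)] rt(2) unfolding isr_def by simp
  have sx: "2 * sum x V = card V * (card V - 1)" using rb rt unfolding x_def by simp
  have sy: "2 * sum y V = card V * (card V - 1)" using rb rt unfolding y_def by simp
  have c8: "\<forall>v\<in>V. CH (ident v) (F v) (NB v) fX fY 8" using locD(8) by simp
  have c14: "\<forall>v\<in>V. CH (ident v) (F v) (NB v) fY fX 14" using locD(9) by simp
  have chx: "\<forall>v\<in>V. x v \<le> card {z\<in>V. x z < x v}"
    using chain_lb[OF fin chain_from_CH[OF c8]] unfolding x_def .
  have chy: "\<forall>v\<in>V. y v \<le> card {z\<in>V. y z < y v}"
    using chain_lb[OF fin chain_from_CH[OF c14]] unfolding y_def .
  have bx: "bij_betw x V {0..<n}" unfolding n_def by (rule lb_sum_bij[OF fin chx sx])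
  have bY: "bij_betw y V {0..<n}" unfolding n_def by (rule lb_sum_bij[OF fin chy sy])
  have sub: "\<forall>u v. E u v \<longrightarrow> disc x y u v"
  proof (intro allI impI)
    fix u v assume Euv: "E u v"
    have uV: "u \<in> V" using Euv E_V1 by blast
    have "\<forall>p\<in>NB u. (fX (snd p) < fX (F u) \<and> fY (F u) < fY (snd p)) \<or> (fX (F u) < fX (snd p) \<and> fY (snd p) < fY (F u))"
      using locD(6)[OF uV] .
    then have "(x v < x u \<and> y u < y v) \<or> (x u < x v \<and> y v < y u)" unfolding ballN x_def y_def using Euv by simp
    then show "disc x y u v" unfolding disc_def by auto
  qed
  have bal: "\<forall>v\<in>V. int (card {u. E v u \<and> x u < x v}) - int (card {u. E v u \<and> x v < x u}) = int (x v) - int (y v)"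
  proof
    fix v assume vV: "v \<in> V"
    show "int (card {u. E v u \<and> x u < x v}) - int (card {u. E v u \<and> x v < x u}) = int (x v) - int (y v)"
      using locD(7)[OF vV] unfolding cardN x_def y_def by simp
  qed
  have sym': "\<forall>u v. E u v \<longrightarrow> u \<in> V \<and> v \<in> V \<and> E v u" using E_V1 E_V2 E_sym by simp
  have comp: "\<forall>u\<in>V. \<forall>v\<in>V. disc x y u v \<longrightarrow> E u v"
    by (rule edges_complete[OF fin bx bY sym' sub bal])
  define \<pi> where "\<pi> = (\<lambda>k. if k < n then y (inv_into V x k) else k)"
  have ix: "inj_on x V" using bx by (simp add: bij_betw_def)
  have bpi: "bij_betw \<pi> {0..<n} {0..<n}"
  proof -
    have "bij_betw (y \<circ> inv_into V x) {0..<n} {0..<n}"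
      by (rule bij_betw_trans[OF bij_betw_inv_into[OF bx] bY])
    moreover have "bij_betw \<pi> {0..<n} {0..<n} = bij_betw (y \<circ> inv_into V x) {0..<n} {0..<n}"
      by (rule bij_betw_cong) (simp add: \<pi>_def)
    ultimately show ?thesis by simp
  qed
  have ppi: "\<pi> permutes {0..<n}"
    by (rule bij_imp_permutes[OF bpi]) (simp add: \<pi>_def)
  have pix: "\<pi> (x u) = y u" if "u \<in> V" for u
  proof -
    have "x u < n" using bx that unfolding bij_betw_def by auto
    then show ?thesis unfolding \<pi>_def using inv_into_f_f[OF ix that] by simp
  qed
  have iprod: "((int a - int b) * (int c - int d) < 0) \<longleftrightarrow> ((a < b \<and> d < c) \<or> (b < a \<and> c < d))" for a b c d :: nat
    by (auto simp: mult_less_0_iff)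
  have edge: "\<forall>u\<in>V. \<forall>v\<in>V. E u v \<longleftrightarrow> perm_edge \<pi> (x u) (x v)"
  proof (intro ballI)
    fix u v assume uV: "u \<in> V" and vV: "v \<in> V"
    have "perm_edge \<pi> (x u) (x v) \<longleftrightarrow> disc x y u v"
      unfolding perm_edge_def pix[OF uV] pix[OF vV] iprod disc_def by auto
    moreover have "E u v \<Longrightarrow> disc x y u v" using sub by simp
    moreover have "disc x y u v \<Longrightarrow> E u v" using comp uV vV by simp
    ultimately show "E u v \<longleftrightarrow> perm_edge \<pi> (x u) (x v)" by blast
  qed
  show ?thesis unfolding is_permutation_graph_def
    by (rule exI[of _ x], rule exI[of _ \<pi>]) (use bx ppi edge n_def in simp)
qed

end


lemma soundness_main:
  assumes net: "network c V E ident" and acc: "all_accept DV V E ident cert"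
  shows "is_permutation_graph V E"
proof -
  define F where "F u = the (dlk 20 (cert u))" for u
  have sg: "simple_graph V E" and cg: "connected_graph V E" and inj: "inj_on ident V"
    using net unfolding network_def by auto
  have fin: "finite V" using sg unfolding simple_graph_def by simp
  have sym: "\<forall>u v. E u v \<longrightarrow> u \<in> V \<and> v \<in> V \<and> u \<noteq> v \<and> E v u" using sg unfolding simple_graph_def by simp
  have ne: "V \<noteq> {}" and conn: "\<forall>u\<in>V. \<forall>v\<in>V. E\<^sup>*\<^sup>* u v" using cg unfolding connected_graph_def by auto
  have loc: "\<forall>v\<in>V. LOC (ident v) (F v) ((\<lambda>u. (ident u, F u)) ` {u. E v u})"
  proof
    fix v assume vV: "v \<in> V"
    define S where "S = {(ident u, cert u) | u. E v u}"
    have dv: "DV (ident v) (cert v) S" using acc vV unfolding all_accept_def S_def by simp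
    then obtain r where r: "dlk 20 (cert v) = Some r" unfolding DV_def by (auto split: option.splits)
    have Fv: "F v = r" unfolding F_def r by simp
    have L: "LOC (ident v) r ((\<lambda>p. (fst p, the (dlk 20 (snd p)))) ` S)"
      using dv r unfolding DV_def by simp
    have "(\<lambda>p. (fst p, the (dlk 20 (snd p)))) ` S = (\<lambda>u. (ident u, F u)) ` {u. E v u}"
    proof -
      have "S = (\<lambda>u. (ident u, cert u)) ` {u. E v u}" unfolding S_def by auto
      then show ?thesis unfolding F_def by (simp add: image_image)
    qed
    then show "LOC (ident v) (F v) ((\<lambda>u. (ident u, F u)) ` {u. E v u})" using L Fv by simp
  qed
  interpret acc_ctx V E ident F
    by unfold_locales (use fin ne sym conn inj loc in auto)
  show ?thesis by (rule sound)
qed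




definition cm :: "(nat \<Rightarrow> nat \<Rightarrow> bool) \<Rightarrow> (nat \<Rightarrow> nat) \<Rightarrow> nat \<Rightarrow> nat" where
  "cm E A v = (if A v = 0 then 0 else if (\<exists>u. E v u \<and> A u < A v) then 1 else 2)"
definition cpn :: "(nat \<Rightarrow> nat \<Rightarrow> bool) \<Rightarrow> (nat \<Rightarrow> nat) \<Rightarrow> nat \<Rightarrow> nat" where
  "cpn E A v = (SOME u. E v u \<and> A u < A v)"
definition cpf :: "nat set \<Rightarrow> (nat \<Rightarrow> nat) \<Rightarrow> (nat \<Rightarrow> nat) \<Rightarrow> nat \<Rightarrow> nat" where
  "cpf V A B v = (SOME p. p \<in> V \<and> A p < A v \<and> (\<forall>z\<in>V. A z < A v \<longrightarrow> B z \<le> B p))"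
definition cw :: "nat set \<Rightarrow> (nat \<Rightarrow> nat \<Rightarrow> bool) \<Rightarrow> (nat \<Rightarrow> nat) \<Rightarrow> (nat \<Rightarrow> nat) \<Rightarrow> nat \<Rightarrow> nat" where
  "cw V E A B v = (SOME w. E v w \<and> E (cpf V A B v) w)"
definition cP :: "nat set \<Rightarrow> (nat \<Rightarrow> nat \<Rightarrow> bool) \<Rightarrow> (nat \<Rightarrow> nat) \<Rightarrow> (nat \<Rightarrow> nat) \<Rightarrow> (nat \<Rightarrow> nat) \<Rightarrow> nat \<Rightarrow> nat" where
  "cP V E ident A B v = (if cm E A v = 1 then ident (cpn E A v) else if cm E A v = 2 then ident (cpf V A B v) else 0)"
definition cW :: "nat set \<Rightarrow> (nat \<Rightarrow> nat \<Rightarrow> bool) \<Rightarrow> (nat \<Rightarrow> nat) \<Rightarrow> (nat \<Rightarrow> nat) \<Rightarrow> (nat \<Rightarrow> nat) \<Rightarrow> nat \<Rightarrow> nat" where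
  "cW V E ident A B v = (if cm E A v = 2 then ident (cw V E A B v) else 0)"
definition cC :: "(nat \<Rightarrow> nat \<Rightarrow> bool) \<Rightarrow> (nat \<Rightarrow> nat) \<Rightarrow> (nat \<Rightarrow> nat) \<Rightarrow> nat \<Rightarrow> nat" where
  "cC E A B v = (if cm E A v = 1 then card {u. E v u \<and> A (cpn E A v) < A u \<and> A u < A v \<and> B v < B u} else 0)"
definition cFX :: "nat set \<Rightarrow> (nat \<Rightarrow> nat \<Rightarrow> bool) \<Rightarrow> (nat \<Rightarrow> nat) \<Rightarrow> (nat \<Rightarrow> nat) \<Rightarrow> nat \<Rightarrow> nat" where
  "cFX V E A B p = (if \<exists>v\<in>V. cm E A v = 2 \<and> cpf V A B v = p then A (SOME v. v \<in> V \<and> cm E A v = 2 \<and> cpf V A B v = p) else 0)"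
definition cFN :: "nat set \<Rightarrow> (nat \<Rightarrow> nat \<Rightarrow> bool) \<Rightarrow> (nat \<Rightarrow> nat) \<Rightarrow> (nat \<Rightarrow> nat) \<Rightarrow> nat \<Rightarrow> nat" where
  "cFN V E A B p = card {u. E p u \<and> A p < A u \<and> A u < cFX V E A B p}"

lemma cross_edge:
  assumes "R\<^sup>*\<^sup>* a b" "Q a" "\<not> Q b"
  shows "\<exists>u w. R u w \<and> Q u \<and> \<not> Q w"
  using assms by (induction rule: rtranclp_induct) auto

locale cctx = gctx +
  fixes A B :: "nat \<Rightarrow> nat"
  assumes bA: "bij_betw A V {0..<card V}" and bB: "bij_betw B V {0..<card V}"
    and edge: "\<forall>u v. E u v \<longleftrightarrow> u \<in> V \<and> v \<in> V \<and> disc A B u v"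
begin

lemma injA: "inj_on A V" using bA by (simp add: bij_betw_def)
lemma injB: "inj_on B V" using bB by (simp add: bij_betw_def)
lemma Alt: "v \<in> V \<Longrightarrow> A v < card V" using bA by (auto simp: bij_betw_def)
lemma Blt: "v \<in> V \<Longrightarrow> B v < card V" using bB by (auto simp: bij_betw_def)

lemma Aeq: "u \<in> V \<Longrightarrow> v \<in> V \<Longrightarrow> A u = A v \<Longrightarrow> u = v" using injA by (simp add: inj_on_eq_iff)
lemma Beq: "u \<in> V \<Longrightarrow> v \<in> V \<Longrightarrow> B u = B v \<Longrightarrow> u = v" using injB by (simp add: inj_on_eq_iff)

lemma E_iff: "E u v \<longleftrightarrow> u \<in> V \<and> v \<in> V \<and> ((A u < A v \<and> B v < B u) \<or> (A v < A u \<and> B u < B v))"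
  using edge unfolding disc_def by blast

lemma card_between:
  assumes uV: "u \<in> V" and vV: "v \<in> V" and lt: "A u < A v"
  shows "card {z\<in>V. A u < A z \<and> A z < A v} = A v - A u - 1"
proof -
  have "A ` {z\<in>V. A u < A z \<and> A z < A v} = {A u<..<A v}"
  proof (intro equalityI subsetI)
    fix k assume "k \<in> {A u<..<A v}"
    then have k: "A u < k" "k < A v" by auto
    then have "k \<in> {0..<card V}" using Alt[OF vV] by simp
    then have "k \<in> A ` V" using bA unfolding bij_betw_def by simp
    then obtain z where "z \<in> V" "A z = k" by blast
    then show "k \<in> A ` {z\<in>V. A u < A z \<and> A z < A v}" using k by auto
  qed auto
  moreover have "inj_on A {z\<in>V. A u < A z \<and> A z < A v}" using injA by (rule inj_on_subset) auto
  then have "card (A ` {z\<in>V. A u < A z \<and> A z < A v}) = card {z\<in>V. A u < A z \<and> A z < A v}"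
    by (rule card_image)
  ultimately show ?thesis by simp
qed

lemma cm_le: "cm E A v \<le> 2" unfolding cm_def by simp
lemma cm0: "cm E A v = 0 \<longleftrightarrow> A v = 0" unfolding cm_def by simp

lemma cpn_prop:
  assumes "cm E A v = 1"
  shows "E v (cpn E A v) \<and> A (cpn E A v) < A v"
proof -
  have "\<exists>u. E v u \<and> A u < A v" using assms unfolding cm_def by (auto split: if_splits)
  then show ?thesis unfolding cpn_def by (rule someI_ex)
qed

lemma cm2: "cm E A v = 2 \<longleftrightarrow> A v \<noteq> 0 \<and> \<not> (\<exists>u. E v u \<and> A u < A v)"
  unfolding cm_def by simp

lemma cpf_prop:
  assumes vV: "v \<in> V" and pos: "A v \<noteq> 0"
  shows "cpf V A B v \<in> V \<and> A (cpf V A B v) < A v \<and> (\<forall>z\<in>V. A z < A v \<longrightarrow> B z \<le> B (cpf V A B v))"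
proof -
  define P where "P = {z\<in>V. A z < A v}"
  have "0 \<in> {0..<card V}" using Alt[OF vV] by simp
  then obtain z0 where "z0 \<in> V" "A z0 = 0" using bA unfolding bij_betw_def by (metis imageE)
  then have "z0 \<in> P" using pos unfolding P_def by simp
  then have neP: "P \<noteq> {}" by auto
  have fP: "finite P" using fin unfolding P_def by simp
  have "Max (B ` P) \<in> B ` P" using fP neP by simp
  then obtain p where p: "p \<in> P" "B p = Max (B ` P)" by (metis imageE)
  have "\<forall>z\<in>P. B z \<le> B p" using p fP by simp
  then have "p \<in> V \<and> A p < A v \<and> (\<forall>z\<in>V. A z < A v \<longrightarrow> B z \<le> B p)" using p(1) unfolding P_def by simp
  then show ?thesis unfolding cpf_def by (rule someI)
qed

lemma cm2_noleft: "cm E A v = 2 \<Longrightarrow> E v u \<Longrightarrow> A v < A u"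
proof -
  assume c: "cm E A v = 2" and e: "E v u"
  then have "\<not> A u < A v" using cm2 by blast
  moreover have "A u \<noteq> A v" using e Aeq E_V1 E_V2 E_ne by blast
  ultimately show "A v < A u" by simp
qed

lemma cpf_Blt:
  assumes vV: "v \<in> V" and c: "cm E A v = 2"
  shows "B (cpf V A B v) < B v"
proof -
  define p where "p = cpf V A B v"
  have pos: "A v \<noteq> 0" using c cm2 by blast
  have p: "p \<in> V" "A p < A v" using cpf_prop[OF vV pos] unfolding p_def by auto
  have "\<not> E v p" using c p(2) cm2 by blast
  then have "\<not> (B v < B p)" using E_iff vV p by blast
  moreover have "B p \<noteq> B v" using Beq p vV by (metis less_irrefl)
  ultimately show ?thesis unfolding p_def by simp
qed

lemma cw_prop:
  assumes vV: "v \<in> V" and c: "cm E A v = 2"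
  shows "E v (cw V E A B v) \<and> E (cpf V A B v) (cw V E A B v)"
proof -
  define p where "p = cpf V A B v"
  have pos: "A v \<noteq> 0" using c cm2 by blast
  have p: "p \<in> V" "A p < A v" "\<forall>z\<in>V. A z < A v \<longrightarrow> B z \<le> B p"
    using cpf_prop[OF vV pos] unfolding p_def by auto
  have Bp: "B p < B v" using cpf_Blt[OF vV c] unfolding p_def .
  have "E\<^sup>*\<^sup>* p v" using conn p(1) vV by simp
  then obtain a b where ab: "E a b" "a \<in> V \<and> A a < A v" "\<not> (b \<in> V \<and> A b < A v)"
    using cross_edge[of E p v "\<lambda>z. z \<in> V \<and> A z < A v"] p by auto
  have bV: "b \<in> V" using ab(1) E_V2 by blast
  have Ab: "A v \<le> A b" using ab(3) bV by simp
  have Aab: "A a < A b" using ab(2) Ab by simp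
  have Bab: "B b < B a" using E_iff ab(1) Aab by auto
  have bv: "b \<noteq> v"
  proof
    assume "b = v"
    then have "E v a" using ab(1) E_sym by simp
    then show False using c ab(2) cm2 by blast
  qed
  have Abv: "A v < A b" using Ab bv Aeq bV vV by (metis le_neq_implies_less)
  have Bba: "B a \<le> B p" using p(3) ab(2) by simp
  have "E v b" using E_iff vV bV Abv Bab Bba Bp by simp
  moreover have "E p b" using E_iff p(1) bV p(2) Abv Bab Bba by simp
  ultimately have "\<exists>w. E v w \<and> E p w" by blast
  then show ?thesis unfolding cw_def p_def by (rule someI_ex)
qed

lemma far_unique:
  assumes aV: "a \<in> V" and bV: "b \<in> V" and ca: "cm E A a = 2" and cb: "cm E A b = 2"
    and eq: "cpf V A B a = cpf V A B b"
  shows "a = b"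
proof (rule ccontr)
  assume ne: "a \<noteq> b"
  have "A a \<noteq> A b" using ne Aeq aV bV by blast
  then consider "A a < A b" | "A b < A a" by linarith
  then show False
  proof cases
    case 1
    have "B a \<le> B (cpf V A B b)" using cpf_prop[OF bV] cb cm2 aV 1 by blast
    moreover have "B (cpf V A B a) < B a" using cpf_Blt[OF aV ca] .
    ultimately show False using eq by simp
  next
    case 2
    have "B b \<le> B (cpf V A B a)" using cpf_prop[OF aV] ca cm2 bV 2 by blast
    moreover have "B (cpf V A B b) < B b" using cpf_Blt[OF bV cb] .
    ultimately show False using eq by simp
  qed
qed

lemma cFX_prop:
  assumes vV: "v \<in> V" and c: "cm E A v = 2"
  shows "cFX V E A B (cpf V A B v) = A v"
proof -
  have ex: "\<exists>v'\<in>V. cm E A v' = 2 \<and> cpf V A B v' = cpf V A B v" using vV c by blast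
  define v' where "v' = (SOME v'. v' \<in> V \<and> cm E A v' = 2 \<and> cpf V A B v' = cpf V A B v)"
  have v': "v' \<in> V \<and> cm E A v' = 2 \<and> cpf V A B v' = cpf V A B v"
    unfolding v'_def by (rule someI_ex) (use ex in blast)
  then have "v' = v" using far_unique vV c by blast
  then show ?thesis unfolding cFX_def using ex v'_def by simp
qed

lemma near_part:
  assumes sV: "s \<in> V" and c: "cm E A s = 1"
  shows "A s = A (cpn E A s) + 1 + cC E A B s + card {z. E (cpn E A s) z \<and> A (cpn E A s) < A z \<and> A z < A s \<and> B z < B s}"
proof -
  define p where "p = cpn E A s"
  have pp: "E s p" "A p < A s" using cpn_prop[OF c] unfolding p_def by auto
  have pV: "p \<in> V" using pp(1) E_V2 by blast
  have Bps: "B s < B p" using E_iff pp by auto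
  define S1 where "S1 = {z. E s z \<and> A p < A z \<and> A z < A s \<and> B s < B z}"
  define S2 where "S2 = {z. E p z \<and> A p < A z \<and> A z < A s \<and> B z < B s}"
  have eq: "{z\<in>V. A p < A z \<and> A z < A s} = S1 \<union> S2"
  proof (intro equalityI subsetI)
    fix z assume z: "z \<in> {z\<in>V. A p < A z \<and> A z < A s}"
    then have zV: "z \<in> V" and a1: "A p < A z" and a2: "A z < A s" by auto
    have "z \<noteq> s" using a2 by auto
    then have "B z \<noteq> B s" using Beq zV sV by blast
    then consider "B s < B z" | "B z < B s" by linarith
    then show "z \<in> S1 \<union> S2"
    proof cases
      case 1 then have "E s z" using E_iff sV zV a2 by simp
      then show ?thesis using 1 a1 a2 unfolding S1_def by simp
    next
      case 2 then have "E p z" using E_iff pV zV a1 Bps by simp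
      then show ?thesis using 2 a1 a2 unfolding S2_def by simp
    qed
  next
    fix z assume "z \<in> S1 \<union> S2"
    then show "z \<in> {z\<in>V. A p < A z \<and> A z < A s}" unfolding S1_def S2_def using E_V2 by auto
  qed
  have f1: "finite S1" unfolding S1_def using finN[of s] by (rule finite_subset[rotated]) auto
  have f2: "finite S2" unfolding S2_def using finN[of p] by (rule finite_subset[rotated]) auto
  have dj: "S1 \<inter> S2 = {}" unfolding S1_def S2_def by auto
  have "A s - A p - 1 = card S1 + card S2"
    using card_between[OF pV sV pp(2)] eq card_Un_disjoint[OF f1 f2 dj] by simp
  moreover have "cC E A B s = card S1" unfolding cC_def S1_def p_def using c by simp
  ultimately show ?thesis using pp(2) unfolding S2_def p_def by simp
qed

lemma far_part:
  assumes vV: "v \<in> V" and c: "cm E A v = 2"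
  shows "A v = A (cpf V A B v) + 1 + cFN V E A B (cpf V A B v)"
proof -
  define p where "p = cpf V A B v"
  have pos: "A v \<noteq> 0" using c cm2 by blast
  have p: "p \<in> V" "A p < A v" "\<forall>z\<in>V. A z < A v \<longrightarrow> B z \<le> B p"
    using cpf_prop[OF vV pos] unfolding p_def by auto
  have fx: "cFX V E A B p = A v" using cFX_prop[OF vV c] unfolding p_def .
  have eq: "{z\<in>V. A p < A z \<and> A z < A v} = {z. E p z \<and> A p < A z \<and> A z < A v}"
  proof (intro equalityI subsetI)
    fix z assume z: "z \<in> {z\<in>V. A p < A z \<and> A z < A v}"
    then have zV: "z \<in> V" and a1: "A p < A z" and a2: "A z < A v" by auto
    have "B z \<le> B p" using p(3) zV a2 by simp
    moreover have "z \<noteq> p" using a1 by auto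
    then have "B z \<noteq> B p" using Beq zV p(1) by blast
    ultimately have "B z < B p" by simp
    then have "E p z" using E_iff p(1) zV a1 by simp
    then show "z \<in> {z. E p z \<and> A p < A z \<and> A z < A v}" using a1 a2 by simp
  next
    fix z assume "z \<in> {z. E p z \<and> A p < A z \<and> A z < A v}"
    then show "z \<in> {z\<in>V. A p < A z \<and> A z < A v}" using E_V2 by auto
  qed
  have "cFN V E A B p = card {z. E p z \<and> A p < A z \<and> A z < A v}" unfolding cFN_def fx ..
  then have "cFN V E A B p = A v - A p - 1" using card_between[OF p(1) vV p(2)] eq by simp
  then show ?thesis using p(2) unfolding p_def by simp
qed


lemma chain_complete:
  assumes fld: "\<forall>u\<in>V. Ag (F u) = A u \<and> Bg (F u) = B u \<and> fM k (F u) = cm E A u \<and> fP k (F u) = cP V E ident A B u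
     \<and> fW k (F u) = cW V E ident A B u \<and> fC k (F u) = cC E A B u \<and> fFX k (F u) = cFX V E A B u \<and> fFN k (F u) = cFN V E A B u"
    and vV: "v \<in> V"
  shows "CH (ident v) (F v) (NB v) Ag Bg k"
proof -
  have fA: "Ag (F u) = A u" and fB: "Bg (F u) = B u" and fMM: "fM k (F u) = cm E A u"
    and fPP: "fP k (F u) = cP V E ident A B u" and fWW: "fW k (F u) = cW V E ident A B u"
    and fCC: "fC k (F u) = cC E A B u" and fFXX: "fFX k (F u) = cFX V E A B u" and fFNN: "fFN k (F u) = cFN V E A B u"
    if "u \<in> V" for u using fld that by auto
  have c1: "fM k (F v) \<le> 2" using fMM[OF vV] cm_le by simp
  have c2: "fM k (F v) = 0 \<longrightarrow> Ag (F v) = 0" using fMM[OF vV] fA[OF vV] cm0 by simp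
  have c3: "fM k (F v) = 1 \<longrightarrow> (\<exists>p\<in>NB v. fst p = fP k (F v) \<and> Ag (snd p) < Ag (F v) \<and>
        fC k (F v) = card {q\<in>NB v. Ag (snd p) < Ag (snd q) \<and> Ag (snd q) < Ag (F v) \<and> Bg (F v) < Bg (snd q)})"
  proof
    assume "fM k (F v) = 1"
    then have m: "cm E A v = 1" using fMM[OF vV] by simp
    define u where "u = cpn E A v"
    have u: "E v u" "A u < A v" using cpn_prop[OF m] unfolding u_def by auto
    have uV: "u \<in> V" using u(1) E_V2 by blast
    have "{u'. E v u' \<and> Ag (F u) < Ag (F u') \<and> Ag (F u') < Ag (F v) \<and> Bg (F v) < Bg (F u')}
        = {u'. E v u' \<and> A u < A u' \<and> A u' < A v \<and> B v < B u'}"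
      using fA fB E_V2 uV vV by auto
    then have "fC k (F v) = card {u'. E v u' \<and> Ag (F u) < Ag (F u') \<and> Ag (F u') < Ag (F v) \<and> Bg (F v) < Bg (F u')}"
      using fCC[OF vV] m unfolding cC_def u_def by simp
    moreover have "ident u = fP k (F v)" using fPP[OF vV] m unfolding cP_def u_def by simp
    moreover have "Ag (F u) < Ag (F v)" using u fA uV vV by simp
    ultimately show "\<exists>p\<in>NB v. fst p = fP k (F v) \<and> Ag (snd p) < Ag (F v) \<and>
        fC k (F v) = card {q\<in>NB v. Ag (snd p) < Ag (snd q) \<and> Ag (snd q) < Ag (F v) \<and> Bg (F v) < Bg (snd q)}"
      unfolding bexN cardN using u(1) by auto
  qed
  have c4: "fM k (F v) = 2 \<longrightarrow> (\<exists>p\<in>NB v. fst p = fW k (F v))"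
  proof
    assume "fM k (F v) = 2"
    then have m: "cm E A v = 2" using fMM[OF vV] by simp
    have "E v (cw V E A B v)" using cw_prop[OF vV m] by simp
    moreover have "ident (cw V E A B v) = fW k (F v)" using fWW[OF vV] m unfolding cW_def by simp
    ultimately show "\<exists>p\<in>NB v. fst p = fW k (F v)" unfolding bexN by auto
  qed
  have c5: "\<forall>p\<in>NB v. fM k (snd p) = 1 \<and> fP k (snd p) = ident v \<longrightarrow>
       Ag (snd p) = Ag (F v) + 1 + fC k (snd p) + card {q\<in>NB v. Ag (F v) < Ag (snd q) \<and> Ag (snd q) < Ag (snd p) \<and> Bg (snd q) < Bg (snd p)}"
    unfolding ballN cardN snd_conv fst_conv
  proof (intro allI impI)
    fix s assume Evs: "E v s" and h: "fM k (F s) = 1 \<and> fP k (F s) = ident v"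
    have sV: "s \<in> V" using Evs E_V2 by blast
    have m: "cm E A s = 1" using h fMM[OF sV] by simp
    have "ident (cpn E A s) = ident v" using h fPP[OF sV] m unfolding cP_def by simp
    moreover have "cpn E A s \<in> V" using cpn_prop[OF m] E_V2 by blast
    ultimately have cv: "cpn E A s = v" using inj vV by (simp add: inj_on_eq_iff)
    have np: "A s = A v + 1 + cC E A B s + card {z. E v z \<and> A v < A z \<and> A z < A s \<and> B z < B s}"
      using near_part[OF sV m] unfolding cv .
    have "{u. E v u \<and> Ag (F v) < Ag (F u) \<and> Ag (F u) < Ag (F s) \<and> Bg (F u) < Bg (F s)}
        = {z. E v z \<and> A v < A z \<and> A z < A s \<and> B z < B s}"
      using fA fB E_V2 sV vV by auto
    then show "Ag (F s) = Ag (F v) + 1 + fC k (F s) + card {u. E v u \<and> Ag (F v) < Ag (F u) \<and> Ag (F u) < Ag (F s) \<and> Bg (F u) < Bg (F s)}"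
      using np fA[OF sV] fA[OF vV] fCC[OF sV] by simp
  qed
  have c6: "fFN k (F v) = card {q\<in>NB v. Ag (F v) < Ag (snd q) \<and> Ag (snd q) < fFX k (F v)}"
  proof -
    have "{u. E v u \<and> Ag (F v) < Ag (F u) \<and> Ag (F u) < fFX k (F v)} = {u. E v u \<and> A v < A u \<and> A u < cFX V E A B v}"
      using fA fFXX vV E_V2 by auto
    then show ?thesis unfolding cardN using fFNN[OF vV] unfolding cFN_def by simp
  qed
  have c7: "\<forall>p\<in>NB v. fM k (snd p) = 2 \<and> fW k (snd p) = ident v \<longrightarrow>
       (\<exists>q\<in>NB v. fst q = fP k (snd p) \<and> Ag (snd q) < Ag (snd p) \<and> fFX k (snd q) = Ag (snd p) \<and> Ag (snd p) = Ag (snd q) + 1 + fFN k (snd q))"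
    unfolding ballN bexN snd_conv fst_conv
  proof (intro allI impI)
    fix s assume Evs: "E v s" and h: "fM k (F s) = 2 \<and> fW k (F s) = ident v"
    have sV: "s \<in> V" using Evs E_V2 by blast
    have m: "cm E A s = 2" using h fMM[OF sV] by simp
    have cwp: "E s (cw V E A B s) \<and> E (cpf V A B s) (cw V E A B s)" using cw_prop[OF sV m] .
    have "ident (cw V E A B s) = ident v" using h fWW[OF sV] m unfolding cW_def by simp
    moreover have "cw V E A B s \<in> V" using cwp E_V2 by blast
    ultimately have cv: "cw V E A B s = v" using inj vV by (simp add: inj_on_eq_iff)
    define q where "q = cpf V A B s"
    have Evq: "E v q" using cwp cv E_sym unfolding q_def by blast
    have qV: "q \<in> V" using Evq E_V2 by blast
    have pos: "A s \<noteq> 0" using m cm2 by blast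
    have Aq: "A q < A s" using cpf_prop[OF sV pos] unfolding q_def by blast
    have iq: "ident q = fP k (F s)" using fPP[OF sV] m unfolding cP_def q_def by simp
    have fx: "fFX k (F q) = Ag (F s)" using fFXX[OF qV] cFX_prop[OF sV m] fA[OF sV] unfolding q_def by simp
    have fp: "Ag (F s) = Ag (F q) + 1 + fFN k (F q)" using far_part[OF sV m] fA[OF sV] fA[OF qV] fFNN[OF qV] unfolding q_def by simp
    show "\<exists>q. E v q \<and> ident q = fP k (F s) \<and> Ag (F q) < Ag (F s) \<and> fFX k (F q) = Ag (F s) \<and> Ag (F s) = Ag (F q) + 1 + fFN k (F q)"
      using Evq iq Aq fx fp fA[OF sV] fA[OF qV] by auto
  qed
  show ?thesis unfolding CH_def using c1 c2 c3 c4 c5 c6 c7 by blast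
qed

end


definition bd :: "(nat \<Rightarrow> nat \<Rightarrow> bool) \<Rightarrow> nat \<Rightarrow> nat \<Rightarrow> nat" where
  "bd E r v = (LEAST k. (E ^^ k) r v)"
definition bpa :: "(nat \<Rightarrow> nat \<Rightarrow> bool) \<Rightarrow> nat \<Rightarrow> nat \<Rightarrow> nat" where
  "bpa E r v = (if v = r then r else (SOME u. E v u \<and> Suc (bd E r u) = bd E r v))"
definition bsub :: "nat set \<Rightarrow> (nat \<Rightarrow> nat \<Rightarrow> bool) \<Rightarrow> nat \<Rightarrow> nat \<Rightarrow> nat set" where
  "bsub V E r v = {u\<in>V. \<exists>k. (bpa E r ^^ k) u = v}"
definition bch :: "nat set \<Rightarrow> (nat \<Rightarrow> nat \<Rightarrow> bool) \<Rightarrow> nat \<Rightarrow> nat \<Rightarrow> nat set" where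
  "bch V E r v = {u\<in>V. u \<noteq> r \<and> bpa E r u = v}"

locale tctx = gctx +
  fixes r :: nat
  assumes rV: "r \<in> V"
begin

abbreviation "d \<equiv> bd E r"
abbreviation "pa' \<equiv> bpa E r"
abbreviation "sub \<equiv> bsub V E r"
abbreviation "ch \<equiv> bch V E r"

lemma d_path: "u \<in> V \<Longrightarrow> (E ^^ d u) r u"
proof -
  assume uV: "u \<in> V"
  have "E\<^sup>*\<^sup>* r u" using conn rV uV by simp
  then have "\<exists>k. (E ^^ k) r u" by (simp add: rtranclp_power)
  then show ?thesis unfolding bd_def by (rule LeastI_ex)
qed

lemma d_le: "(E ^^ k) r u \<Longrightarrow> d u \<le> k"
  unfolding bd_def by (rule Least_le)

lemma d0: "u \<in> V \<Longrightarrow> d u = 0 \<longleftrightarrow> u = r"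
proof -
  assume uV: "u \<in> V"
  show ?thesis
  proof
    assume "d u = 0"
    then have "(E ^^ 0) r u" using d_path[OF uV] by simp
    then show "u = r" by simp
  next
    assume "u = r"
    have "(E ^^ 0) r r" by simp
    then show "d u = 0" using d_le[of 0 u] \<open>u = r\<close> by simp
  qed
qed

lemma pa_prop':
  assumes uV: "u \<in> V" and ur: "u \<noteq> r"
  shows "E u (pa' u) \<and> Suc (d (pa' u)) = d u \<and> pa' u \<in> V"
proof -
  have "d u \<noteq> 0" using d0[OF uV] ur by simp
  then obtain m where m: "d u = Suc m" by (cases "d u") auto
  have "(E ^^ Suc m) r u" using d_path[OF uV] m by simp
  then obtain w where w: "(E ^^ m) r w" "E w u" by (rule relpowp_Suc_E)
  have wV: "w \<in> V" using w(2) E_V1 by blast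
  have "d w \<le> m" using d_le[OF w(1)] .
  moreover have "d u \<le> Suc (d w)" using d_le[OF relpowp_Suc_I[OF d_path[OF wV] w(2)]] .
  ultimately have "Suc (d w) = d u" using m by simp
  then have ex: "\<exists>w. E u w \<and> Suc (d w) = d u" using w(2) E_sym by blast
  have "E u (pa' u) \<and> Suc (d (pa' u)) = d u"
    unfolding bpa_def using ur someI_ex[OF ex] by simp
  then show ?thesis using E_V2 by blast
qed

lemma pa_r: "pa' r = r" unfolding bpa_def by simp

lemma iter_prop: "u \<in> V \<Longrightarrow> (pa' ^^ k) u \<in> V \<and> d ((pa' ^^ k) u) = d u - k"
proof (induction k)
  case 0 then show ?case by simp
next
  case (Suc k)
  define w where "w = (pa' ^^ k) u"
  have w: "w \<in> V" "d w = d u - k" using Suc unfolding w_def by auto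
  have "(pa' ^^ Suc k) u = pa' w" unfolding w_def by simp
  moreover have "pa' w \<in> V \<and> d (pa' w) = d u - Suc k"
  proof (cases "w = r")
    case True
    then have "d w = 0" using d0 w(1) by simp
    then show ?thesis using True pa_r rV w(2) by simp
  next
    case False
    have "Suc (d (pa' w)) = d w" "pa' w \<in> V" using pa_prop'[OF w(1) False] by auto
    then show ?thesis using w(2) by arith
  qed
  ultimately show ?case by simp
qed

lemma sub_r: "sub r = V"
proof (intro equalityI subsetI)
  fix u assume uV: "u \<in> V"
  have "d ((pa' ^^ d u) u) = 0" "(pa' ^^ d u) u \<in> V" using iter_prop[OF uV, of "d u"] by auto
  then have "(pa' ^^ d u) u = r" using d0 by blast
  then show "u \<in> sub r" unfolding bsub_def using uV by blast
qed (auto simp: bsub_def)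

lemma sub_V: "sub v \<subseteq> V" unfolding bsub_def by auto
lemma sub_fin: "finite (sub v)" using fin sub_V by (rule finite_subset[rotated])

lemma ch_d: "u \<in> ch v \<Longrightarrow> Suc (d v) = d u \<and> u \<in> V \<and> u \<noteq> r"
  unfolding bch_def using pa_prop' by auto

lemma sub_iter_d: "z \<in> V \<Longrightarrow> (pa' ^^ k) z = v \<Longrightarrow> d v = d z - k"
  using iter_prop by blast

lemma sub_decomp:
  assumes vV: "v \<in> V"
  shows "sub v = insert v (\<Union>u\<in>ch v. sub u)"
proof (intro equalityI subsetI)
  fix z assume "z \<in> sub v"
  then obtain k where zV: "z \<in> V" and zk: "(pa' ^^ k) z = v" unfolding bsub_def by blast
  have "\<forall>z\<in>V. (pa' ^^ k) z = v \<longrightarrow> z \<in> insert v (\<Union>u\<in>ch v. sub u)" for k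
  proof (induction k)
    case 0 then show ?case by simp
  next
    case (Suc k)
    show ?case
    proof (intro ballI impI)
      fix z assume zV: "z \<in> V" and zk: "(pa' ^^ Suc k) z = v"
      define u where "u = (pa' ^^ k) z"
      have uV: "u \<in> V" using iter_prop[OF zV] unfolding u_def by blast
      have pu: "pa' u = v" using zk unfolding u_def by simp
      show "z \<in> insert v (\<Union>u\<in>ch v. sub u)"
      proof (cases "u = r")
        case True
        then have "v = r" using pu pa_r by simp
        then have "(pa' ^^ k) z = v" using True unfolding u_def by simp
        then show ?thesis using Suc.IH zV by blast
      next
        case False
        then have "u \<in> ch v" using uV pu unfolding bch_def by simp
        moreover have "z \<in> sub u" unfolding bsub_def u_def using zV by blast
        ultimately show ?thesis by blast
      qed
    qed
  qed
  then show "z \<in> insert v (\<Union>u\<in>ch v. sub u)" using zV zk by blast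
next
  fix z assume "z \<in> insert v (\<Union>u\<in>ch v. sub u)"
  then consider "z = v" | u where "u \<in> ch v" "z \<in> sub u" by blast
  then show "z \<in> sub v"
  proof cases
    case 1
    then show ?thesis unfolding bsub_def using vV by (auto intro: exI[of _ 0])
  next
    case 2
    then obtain k where zV: "z \<in> V" and zk: "(pa' ^^ k) z = u" unfolding bsub_def by blast
    have "pa' u = v" using 2(1) unfolding bch_def by simp
    then have "(pa' ^^ Suc k) z = v" using zk by simp
    then show ?thesis unfolding bsub_def using zV by blast
  qed
qed

lemma sub_notin:
  assumes "u \<in> ch v" shows "v \<notin> sub u"
proof
  assume "v \<in> sub u"
  then obtain k where vV: "v \<in> V" and vk: "(pa' ^^ k) v = u" unfolding bsub_def by blast
  have "d u = d v - k" using sub_iter_d[OF vV vk] .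
  moreover have "Suc (d v) = d u" using ch_d[OF assms] by simp
  ultimately show False by simp
qed

lemma sub_disj:
  assumes u1: "u1 \<in> ch v" and u2: "u2 \<in> ch v" and ne: "u1 \<noteq> u2"
  shows "sub u1 \<inter> sub u2 = {}"
proof (rule ccontr)
  assume "sub u1 \<inter> sub u2 \<noteq> {}"
  then obtain z k1 k2 where zV: "z \<in> V" and k1: "(pa' ^^ k1) z = u1" and k2: "(pa' ^^ k2) z = u2"
    unfolding bsub_def by blast
  have d1: "d u1 = d z - k1" using sub_iter_d[OF zV k1] .
  have d2: "d u2 = d z - k2" using sub_iter_d[OF zV k2] .
  have "d u1 = Suc (d v)" "d u2 = Suc (d v)" using ch_d[OF u1] ch_d[OF u2] by auto
  then have "k1 = k2" using d1 d2 by simp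
  then show False using k1 k2 ne by simp
qed

lemma sub_sum:
  assumes vV: "v \<in> V"
  shows "(\<Sum>z\<in>sub v. g z) = g v + (\<Sum>u\<in>ch v. \<Sum>z\<in>sub u. g z)"
proof -
  have fch: "finite (ch v)" using fin unfolding bch_def by simp
  have "(\<Sum>z\<in>(\<Union>u\<in>ch v. sub u). g z) = (\<Sum>u\<in>ch v. \<Sum>z\<in>sub u. g z)"
    by (rule sum.UNION_disjoint[OF fch]) (use sub_fin sub_disj in auto)
  moreover have "v \<notin> (\<Union>u\<in>ch v. sub u)" using sub_notin by blast
  moreover have "finite (\<Union>u\<in>ch v. sub u)" using fch sub_fin by simp
  ultimately show ?thesis using sub_decomp[OF vV] by simp
qed

end


lemma two_sum: "2 * (\<Sum>k<n. k) = n * (n - 1 :: nat)"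
  by (induction n) (auto simp: algebra_simps)

lemma bij_sum:
  assumes "bij_betw (A :: nat \<Rightarrow> nat) V {0..<n}"
  shows "2 * (\<Sum>v\<in>V. A v) = n * (n - 1)"
proof -
  have "(\<Sum>v\<in>V. A v) = (\<Sum>k\<in>{0..<n}. k)" using sum.reindex_bij_betw[OF assms, of "\<lambda>k. k"] by simp
  also have "\<dots> = (\<Sum>k<n. k)" by (simp add: atLeast0LessThan)
  finally show ?thesis using two_sum by simp
qed

lemma disc_swap: "disc y x u v = disc x y u v" unfolding disc_def by auto

definition GG :: "nat set \<Rightarrow> (nat \<Rightarrow> nat \<Rightarrow> bool) \<Rightarrow> (nat \<Rightarrow> nat) \<Rightarrow> (nat \<Rightarrow> nat) \<Rightarrow> (nat \<Rightarrow> nat) \<Rightarrow> nat \<Rightarrow> nat \<Rightarrow> nat list" where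
  "GG V E ident X Y r v = [ident r, card V, ident (bpa E r v), card (bsub V E r v),
     (\<Sum>z\<in>bsub V E r v. X z), (\<Sum>z\<in>bsub V E r v. Y z), X v, Y v,
     cm E X v, cP V E ident X Y v, cW V E ident X Y v, cC E X Y v, cFX V E X Y v, cFN V E X Y v,
     cm E Y v, cP V E ident Y X v, cW V E ident Y X v, cC E Y X v, cFX V E Y X v, cFN V E Y X v]"

locale fctx =
  fixes V :: "nat set" and E :: "nat \<Rightarrow> nat \<Rightarrow> bool" and ident :: "nat \<Rightarrow> nat" and X Y :: "nat \<Rightarrow> nat" and r :: nat
  assumes fin: "finite V" and ne: "V \<noteq> {}"
    and sym: "\<forall>u v. E u v \<longrightarrow> u \<in> V \<and> v \<in> V \<and> u \<noteq> v \<and> E v u"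
    and conn: "\<forall>u\<in>V. \<forall>v\<in>V. E\<^sup>*\<^sup>* u v"
    and inj: "inj_on ident V"
    and bX: "bij_betw X V {0..<card V}" and bY: "bij_betw Y V {0..<card V}"
    and edge: "\<forall>u v. E u v \<longleftrightarrow> u \<in> V \<and> v \<in> V \<and> disc X Y u v"
    and rV: "r \<in> V"
begin

abbreviation "G \<equiv> GG V E ident X Y r"

lemma G_fields:
  "fRT (G v) = ident r" "fNN (G v) = card V" "fPAR (G v) = ident (bpa E r v)"
  "fSZ (G v) = card (bsub V E r v)" "fSX (G v) = (\<Sum>z\<in>bsub V E r v. X z)" "fSY (G v) = (\<Sum>z\<in>bsub V E r v. Y z)"
  "fX (G v) = X v" "fY (G v) = Y v"
  "fM 8 (G v) = cm E X v" "fP 8 (G v) = cP V E ident X Y v" "fW 8 (G v) = cW V E ident X Y v"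
  "fC 8 (G v) = cC E X Y v" "fFX 8 (G v) = cFX V E X Y v" "fFN 8 (G v) = cFN V E X Y v"
  "fM 14 (G v) = cm E Y v" "fP 14 (G v) = cP V E ident Y X v" "fW 14 (G v) = cW V E ident Y X v"
  "fC 14 (G v) = cC E Y X v" "fFX 14 (G v) = cFX V E Y X v" "fFN 14 (G v) = cFN V E Y X v"
  by (simp_all add: GG_def fRT_def fNN_def fPAR_def fSZ_def fSX_def fSY_def fX_def fY_def fM_def fP_def fW_def fC_def fFX_def fFN_def)

lemma G_len: "length (G v) = 20" by (simp add: GG_def)

sublocale g: gctx V E ident G
  by unfold_locales (use fin ne sym conn inj in auto)

sublocale t: tctx V E ident G r
  by unfold_locales (use rV in auto)

sublocale c1: cctx V E ident G X Y
  by unfold_locales (use bX bY edge in auto)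

sublocale c2: cctx V E ident G Y X
  by unfold_locales (use bX bY edge in \<open>auto simp: disc_def\<close>)

lemma loc_G: "v \<in> V \<Longrightarrow> LOC (ident v) (G v) (g.NB v)"
proof -
  assume vV: "v \<in> V"
  have ch_eq: "{u. E v u \<and> fPAR (G u) = ident v \<and> ident u \<noteq> fRT (G u)} = bch V E r v"
  proof (intro equalityI subsetI)
    fix u assume "u \<in> {u. E v u \<and> fPAR (G u) = ident v \<and> ident u \<noteq> fRT (G u)}"
    then have u: "E v u" "ident (bpa E r u) = ident v" "ident u \<noteq> ident r" by (auto simp: G_fields)
    have uV: "u \<in> V" using u(1) g.E_V2 by blast
    have ur: "u \<noteq> r" using u(3) by auto
    have "bpa E r u \<in> V" using t.pa_prop'[OF uV ur] by blast
    then have "bpa E r u = v" using u(2) inj vV by (simp add: inj_on_eq_iff)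
    then show "u \<in> bch V E r v" unfolding bch_def using uV ur by simp
  next
    fix u assume "u \<in> bch V E r v"
    then have u: "u \<in> V" "u \<noteq> r" "bpa E r u = v" unfolding bch_def by auto
    have "E u v" using t.pa_prop'[OF u(1,2)] u(3) by simp
    then have "E v u" using g.E_sym by blast
    moreover have "ident u \<noteq> ident r" using u(1,2) rV inj by (simp add: inj_on_eq_iff)
    ultimately show "u \<in> {u. E v u \<and> fPAR (G u) = ident v \<and> ident u \<noteq> fRT (G u)}"
      using u(3) by (simp add: G_fields)
  qed
  have chsum: "(\<Sum>p\<in>children (ident v) (g.NB v). h (snd p)) = (\<Sum>u\<in>bch V E r v. h (G u))" for h
    unfolding children_def using g.sumN[where v=v and P="\<lambda>p. fPAR (snd p) = ident v \<and> fst p \<noteq> fRT (snd p)" and h=h] ch_eq by simp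
  have l1: "\<forall>p\<in>g.NB v. fRT (snd p) = fRT (G v) \<and> fNN (snd p) = fNN (G v)"
    unfolding g.ballN by (simp add: G_fields)
  have l2: "if ident v = fRT (G v) then fSZ (G v) = fNN (G v) \<and> 2 * fSX (G v) = fNN (G v) * (fNN (G v) - 1) \<and> 2 * fSY (G v) = fNN (G v) * (fNN (G v) - 1)
   else (\<exists>p\<in>g.NB v. fst p = fPAR (G v))"
  proof (cases "v = r")
    case True
    then show ?thesis using t.sub_r bij_sum[OF bX] bij_sum[OF bY] by (simp add: G_fields)
  next
    case False
    then have "ident v \<noteq> ident r" using vV rV inj by (simp add: inj_on_eq_iff)
    moreover have "E v (bpa E r v)" using t.pa_prop'[OF vV False] by simp
    ultimately show ?thesis unfolding g.bexN by (auto simp: G_fields)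
  qed
  have l3: "fSZ (G v) = 1 + (\<Sum>p\<in>children (ident v) (g.NB v). fSZ (snd p))"
  proof -
    have "card (bsub V E r v) = 1 + (\<Sum>u\<in>bch V E r v. card (bsub V E r u))"
      using t.sub_sum[OF vV, of "\<lambda>z. 1::nat"] unfolding card_eq_sum by simp
    then show ?thesis using chsum[of fSZ] by (simp add: G_fields)
  qed
  have l4: "fSX (G v) = fX (G v) + (\<Sum>p\<in>children (ident v) (g.NB v). fSX (snd p))"
    using t.sub_sum[OF vV, of X] chsum[of fSX] by (simp add: G_fields)
  have l5: "fSY (G v) = fY (G v) + (\<Sum>p\<in>children (ident v) (g.NB v). fSY (snd p))"
    using t.sub_sum[OF vV, of Y] chsum[of fSY] by (simp add: G_fields)
  have l6: "\<forall>p\<in>g.NB v. (fX (snd p) < fX (G v) \<and> fY (G v) < fY (snd p)) \<or> (fX (G v) < fX (snd p) \<and> fY (snd p) < fY (G v))"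
    unfolding g.ballN using edge unfolding disc_def by (auto simp: G_fields)
  have l7: "int (card {p\<in>g.NB v. fX (snd p) < fX (G v)}) - int (card {p\<in>g.NB v. fX (G v) < fX (snd p)}) = int (fX (G v)) - int (fY (G v))"
  proof -
    have e1: "{u. E v u \<and> X u < X v} = {z\<in>V. X z < X v \<and> Y v < Y z}" using edge vV unfolding disc_def by auto
    have e2: "{u. E v u \<and> X v < X u} = {z\<in>V. X v < X z \<and> Y z < Y v}" using edge vV unfolding disc_def by auto
    show ?thesis unfolding g.cardN using bij_diff[OF fin bX bY vV] e1 e2 by (simp add: G_fields)
  qed
  have l8: "CH (ident v) (G v) (g.NB v) fX fY 8"
    by (rule c1.chain_complete[OF _ vV]) (simp add: G_fields)
  have l9: "CH (ident v) (G v) (g.NB v) fY fX 14"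
    by (rule c2.chain_complete[OF _ vV]) (simp add: G_fields)
  show ?thesis unfolding LOC_def using l1 l2 l3 l4 l5 l6 l7 l8 l9 by blast
qed


lemma acc_G: "all_accept DV V E ident (\<lambda>v. enl (G v))"
  unfolding all_accept_def
proof
  fix v assume vV: "v \<in> V"
  define S where "S = {(ident u, enl (G u)) | u. E v u}"
  have S: "S = (\<lambda>u. (ident u, enl (G u))) ` {u. E v u}" unfolding S_def by auto
  have d: "dlk 20 (enl (G u)) = Some (G u)" for u using dlk_enl[OF G_len] by simp
  have "(\<lambda>p. (fst p, the (dlk 20 (snd p)))) ` S = g.NB v"
    unfolding S g.NB_def by (simp add: image_image d)
  moreover have "\<forall>p\<in>S. dlk 20 (snd p) \<noteq> None" unfolding S using d by auto
  ultimately have "DV (ident v) (enl (G v)) S" unfolding DV_def using d loc_G[OF vV] by simp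
  then show "DV (ident v) (enl (G v)) {(ident u, enl (G u)) | u. E v u}" unfolding S_def .
qed

lemma len_G:
  assumes idb: "\<forall>v\<in>V. ident v \<le> card V ^ c" and vV: "v \<in> V"
  shows "real (length (enl (G v))) \<le> real (20 * (2 * (c + 2) + 3)) * log 2 (real (card V) + 1)"
proof -
  define n where "n = card V"
  define B where "B = (n + 1) ^ (c + 2)"
  have n1: "n \<ge> 1" using fin ne unfolding n_def by (simp add: Suc_leI card_gt_0_iff)
  have b1: "n ^ c \<le> B"
  proof -
    have "n ^ c \<le> (n + 1) ^ c" by (rule power_mono) auto
    also have "\<dots> \<le> (n + 1) ^ (c + 2)" by (rule power_increasing) auto
    finally show ?thesis unfolding B_def .
  qed
  have b2: "n * n \<le> B"
  proof -
    have "n * n \<le> (n + 1) ^ 2" by (simp add: power2_eq_square)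
    also have "\<dots> \<le> (n + 1) ^ (c + 2)" by (rule power_increasing) auto
    finally show ?thesis unfolding B_def .
  qed
  have b3: "n + 1 \<le> B"
  proof -
    have "(n + 1) ^ 1 \<le> (n + 1) ^ (c + 2)" by (rule power_increasing) auto
    then show ?thesis unfolding B_def by simp
  qed
  have idB: "ident u \<le> B" if "u \<in> V" for u using idb that b1 unfolding n_def by (metis le_trans)
  have XB: "X u \<le> B" if "u \<in> V" for u using c1.Alt[OF that] b3 unfolding n_def by simp
  have YB: "Y u \<le> B" if "u \<in> V" for u using c1.Blt[OF that] b3 unfolding n_def by simp
  have cardB: "card S \<le> B" if "S \<subseteq> V" for S
  proof -
    have "card S \<le> n" using card_mono[OF fin that] unfolding n_def .
    then show ?thesis using b3 by simp
  qed
  have nbB: "card {u. E w u \<and> P u} \<le> B" for w P by (rule cardB) (use g.E_V2 in auto)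
  have sumB: "(\<Sum>z\<in>bsub V E r v. Z z) \<le> B" if Z: "\<forall>z\<in>V. Z z < n" for Z
  proof -
    have "(\<Sum>z\<in>bsub V E r v. Z z) \<le> (\<Sum>z\<in>bsub V E r v. n)"
    proof (rule sum_mono)
      fix z assume "z \<in> bsub V E r v"
      then have "z \<in> V" using t.sub_V by blast
      then show "Z z \<le> n" using Z by (simp add: less_imp_le)
    qed
    also have "\<dots> = card (bsub V E r v) * n" by simp
    also have "\<dots> \<le> n * n" using card_mono[OF fin t.sub_V] unfolding n_def by simp
    finally show ?thesis using b2 by simp
  qed
  have paV: "bpa E r v \<in> V" using t.pa_prop'[OF vV] rV t.pa_r by (cases "v = r") auto
  have cmB: "cm E Z v \<le> B" for Z using b3 n1 unfolding cm_def by auto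
  have cP1: "cP V E ident X Y v \<le> B"
  proof -
    have "cm E X v = 1 \<Longrightarrow> cpn E X v \<in> V" using c1.cpn_prop g.E_V2 by blast
    moreover have "cm E X v = 2 \<Longrightarrow> cpf V X Y v \<in> V" using c1.cpf_prop[OF vV] c1.cm2 by blast
    ultimately show ?thesis unfolding cP_def using idB by auto
  qed
  have cP2: "cP V E ident Y X v \<le> B"
  proof -
    have "cm E Y v = 1 \<Longrightarrow> cpn E Y v \<in> V" using c2.cpn_prop g.E_V2 by blast
    moreover have "cm E Y v = 2 \<Longrightarrow> cpf V Y X v \<in> V" using c2.cpf_prop[OF vV] c2.cm2 by blast
    ultimately show ?thesis unfolding cP_def using idB by auto
  qed
  have cW1: "cW V E ident X Y v \<le> B"
  proof -
    have "cm E X v = 2 \<Longrightarrow> cw V E X Y v \<in> V" using c1.cw_prop[OF vV] g.E_V2 by blast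
    then show ?thesis unfolding cW_def using idB by auto
  qed
  have cW2: "cW V E ident Y X v \<le> B"
  proof -
    have "cm E Y v = 2 \<Longrightarrow> cw V E Y X v \<in> V" using c2.cw_prop[OF vV] g.E_V2 by blast
    then show ?thesis unfolding cW_def using idB by auto
  qed
  have cC1: "cC E X Y v \<le> B" unfolding cC_def using nbB by simp
  have cC2: "cC E Y X v \<le> B" unfolding cC_def using nbB by simp
  have cFX1: "cFX V E X Y v \<le> B"
  proof (cases "\<exists>w\<in>V. cm E X w = 2 \<and> cpf V X Y w = v")
    case True
    then have "(SOME w. w \<in> V \<and> cm E X w = 2 \<and> cpf V X Y w = v) \<in> V"
      by (metis (mono_tags, lifting) someI_ex)
    then show ?thesis unfolding cFX_def using True XB by simp
  qed (auto simp: cFX_def)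
  have cFX2: "cFX V E Y X v \<le> B"
  proof (cases "\<exists>w\<in>V. cm E Y w = 2 \<and> cpf V Y X w = v")
    case True
    then have "(SOME w. w \<in> V \<and> cm E Y w = 2 \<and> cpf V Y X w = v) \<in> V"
      by (metis (mono_tags, lifting) someI_ex)
    then show ?thesis unfolding cFX_def using True YB by simp
  qed (auto simp: cFX_def)
  have cFN1: "cFN V E X Y v \<le> B" unfolding cFN_def using nbB by simp
  have cFN2: "cFN V E Y X v \<le> B" unfolding cFN_def using nbB by simp
  have allB: "\<forall>k\<in>set (G v). k \<le> B"
    using idB[OF rV] b3 idB[OF paV] cardB[OF t.sub_V] sumB c1.Alt c1.Blt XB[OF vV] YB[OF vV]
      cmB cP1 cW1 cC1 cFX1 cFN1 cP2 cW2 cC2 cFX2 cFN2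
    unfolding GG_def n_def by simp
  have "real (length (enl (G v))) \<le> real (length (G v)) * ((2 * real (c + 2) + 3) * log 2 (real n + 1))"
    by (rule length_enl_bound[OF n1]) (use allB in \<open>simp add: B_def\<close>)
  then show ?thesis unfolding G_len n_def by (simp add: algebra_simps)
qed

end

lemma completeness_main:
  assumes net: "network c V E ident" and pg: "is_permutation_graph V E"
  shows "\<exists>cert. (\<forall>v\<in>V. real (length (cert v)) \<le> real (20 * (2 * (c + 2) + 3)) * log 2 (real (card V) + 1))
           \<and> all_accept DV V E ident cert"
proof -
  have sg: "simple_graph V E" and cg: "connected_graph V E" and inj: "inj_on ident V"
    and idb: "\<forall>v\<in>V. 1 \<le> ident v \<and> ident v \<le> card V ^ c"
    using net unfolding network_def by auto
  have fin: "finite V" using sg unfolding simple_graph_def by simp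
  have sym: "\<forall>u v. E u v \<longrightarrow> u \<in> V \<and> v \<in> V \<and> u \<noteq> v \<and> E v u" using sg unfolding simple_graph_def by simp
  have ne: "V \<noteq> {}" and conn: "\<forall>u\<in>V. \<forall>v\<in>V. E\<^sup>*\<^sup>* u v" using cg unfolding connected_graph_def by auto
  obtain f \<pi> where bf: "bij_betw f V {0..<card V}" and pp: "\<pi> permutes {0..<card V}"
    and ed: "\<forall>u\<in>V. \<forall>v\<in>V. E u v \<longleftrightarrow> perm_edge \<pi> (f u) (f v)"
    using pg unfolding is_permutation_graph_def by blast
  define Y where "Y u = \<pi> (f u)" for u
  have bY: "bij_betw Y V {0..<card V}"
  proof -
    have "bij_betw (\<pi> \<circ> f) V {0..<card V}" by (rule bij_betw_trans[OF bf permutes_imp_bij[OF pp]])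
    then show ?thesis unfolding Y_def comp_def .
  qed
  have iprod: "((int a - int b) * (int c - int d) < 0) \<longleftrightarrow> ((a < b \<and> d < c) \<or> (b < a \<and> c < d))" for a b c d :: nat
    by (auto simp: mult_less_0_iff)
  have edge: "\<forall>u v. E u v \<longleftrightarrow> u \<in> V \<and> v \<in> V \<and> disc f Y u v"
  proof (intro allI)
    fix u v
    show "E u v \<longleftrightarrow> u \<in> V \<and> v \<in> V \<and> disc f Y u v"
    proof (cases "u \<in> V \<and> v \<in> V")
      case True
      then have "E u v \<longleftrightarrow> perm_edge \<pi> (f u) (f v)" using ed by simp
      also have "\<dots> \<longleftrightarrow> disc f Y u v" unfolding perm_edge_def iprod disc_def Y_def by auto
      finally show ?thesis using True by simp
    next
      case False
      then show ?thesis using sym by blast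
    qed
  qed
  obtain r where rV: "r \<in> V" using ne by blast
  interpret fctx V E ident f Y r
    by unfold_locales (use fin ne sym conn inj bf bY edge rV in auto)
  have idb': "\<forall>v\<in>V. ident v \<le> card V ^ c" using idb by simp
  show ?thesis
    by (rule exI[of _ "\<lambda>v. enl (GG V E ident f Y r v)"]) (use len_G[OF idb'] acc_G in auto)
qed



theorem theorem1:
  fixes c :: nat
  shows "\<exists>(D :: verifier) (K :: real).
    \<forall>V E ident. network c V E ident \<longrightarrow>
      ((is_permutation_graph V E \<longrightarrow>
          (\<exists>cert. (\<forall>v\<in>V. real (length (cert v)) \<le> K * log 2 (real (card V) + 1))
                 \<and> all_accept D V E ident cert))
       \<and> (\<not> is_permutation_graph V E \<longrightarrow> (\<forall>cert. \<not> all_accept D V E ident cert)))"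
proof (rule exI[of _ DV], rule exI[of _ "real (20 * (2 * (c + 2) + 3))"], intro allI impI)
  fix V E ident
  assume net: "network c V E ident"
  have A: "is_permutation_graph V E \<longrightarrow>
          (\<exists>cert. (\<forall>v\<in>V. real (length (cert v)) \<le> real (20 * (2 * (c + 2) + 3)) * log 2 (real (card V) + 1))
                 \<and> all_accept DV V E ident cert)"
    using completeness_main[OF net] by blast
  have B: "\<not> is_permutation_graph V E \<longrightarrow> (\<forall>cert. \<not> all_accept DV V E ident cert)"
    using soundness_main[OF net] by blast
  show "(is_permutation_graph V E \<longrightarrow>
          (\<exists>cert. (\<forall>v\<in>V. real (length (cert v)) \<le> real (20 * (2 * (c + 2) + 3)) * log 2 (real (card V) + 1))
                 \<and> all_accept DV V E ident cert))
       \<and> (\<not> is_permutation_graph V E \<longrightarrow> (\<forall>cert. \<not> all_accept DV V E ident cert))"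
    using A B by (rule conjI)
qed


end
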